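(* There is a function $f$ such that, for every graph $H$ and every positive integer $t$, one of the following holds: (i) $K_t$ is a projection of $H$; (ii) $K_{t,t,t}$ is a projection of $H$; (iii) an extended biclique can be obtained from $H$ by deleting at most $f(t)$ vertices.
   Context: A graph $H'$ is a projection of $H$ if $H'$ can be obtained from $H$ by a sequence of vertex deletions and identifications of two nonadjacent vertices. $K_{t,t,t}$ is the complete tripartite graph with three parts of size $t$. An extended biclique is a complete bipartite graph together with a set of isolated vertices. *)

theory Defs
  imports Main
begin

type_synonym 'a graph = "'a set \<times> 'a set set"

definition verts :: "'a graph \<Rightarrow> 'a set" where "verts G = fst G"
definition edges :: "'a graph \<Rightarrow> 'a set set" where "edges G = snd G"

definition wf_graph :: "'a graph \<Rightarrow> bool" where
  "wf_graph G \<longleftrightarrow> finite (verts G) \<and>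
     (\<forall>e\<in>edges G. \<exists>x y. x \<noteq> y \<and> x \<in> verts G \<and> y \<in> verts G \<and> e = {x, y})"

definition delete_vertex :: "'a graph \<Rightarrow> 'a \<Rightarrow> 'a graph" where
  "delete_vertex G v = (verts G - {v}, {e \<in> edges G. v \<notin> e})"

definition identify :: "'a graph \<Rightarrow> 'a \<Rightarrow> 'a \<Rightarrow> 'a graph" where
  "identify G u v = (verts G - {v},
     {e \<in> edges G. v \<notin> e} \<union> {{u, w} | w. {v, w} \<in> edges G})"

inductive proj_reach :: "'a graph \<Rightarrow> 'a graph \<Rightarrow> bool" for H where
  refl: "proj_reach H H"
| del: "proj_reach H G \<Longrightarrow> v \<in> verts G \<Longrightarrow> proj_reach H (delete_vertex G v)"
| ident: "proj_reach H G \<Longrightarrow> u \<in> verts G \<Longrightarrow> v \<in> verts G \<Longrightarrow> u \<noteq> v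
           \<Longrightarrow> {u, v} \<notin> edges G \<Longrightarrow> proj_reach H (identify G u v)"

definition graph_iso :: "'a graph \<Rightarrow> 'b graph \<Rightarrow> bool" where
  "graph_iso G G' \<longleftrightarrow> (\<exists>f. bij_betw f (verts G) (verts G') \<and>
     (\<forall>x\<in>verts G. \<forall>y\<in>verts G. {x, y} \<in> edges G \<longleftrightarrow> {f x, f y} \<in> edges G'))"

definition is_projection :: "'b graph \<Rightarrow> 'a graph \<Rightarrow> bool" where
  "is_projection H' H \<longleftrightarrow> (\<exists>G. proj_reach H G \<and> graph_iso G H')"

definition complete_graph :: "nat \<Rightarrow> nat graph" where
  "complete_graph t = ({0..<t}, {{x, y} | x y. x < t \<and> y < t \<and> x \<noteq> y})"

definition complete_tripartite :: "nat \<Rightarrow> (nat \<times> nat) graph" where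
  "complete_tripartite t = ({0..<3} \<times> {0..<t},
     {{x, y} | x y. x \<in> {0..<3} \<times> {0..<t} \<and> y \<in> {0..<3} \<times> {0..<t} \<and> fst x \<noteq> fst y})"

definition extended_biclique :: "'a graph \<Rightarrow> bool" where
  "extended_biclique G \<longleftrightarrow> (\<exists>A B I. A \<inter> B = {} \<and> A \<inter> I = {} \<and> B \<inter> I = {} \<and>
     verts G = A \<union> B \<union> I \<and> edges G = {{a, b} | a b. a \<in> A \<and> b \<in> B})"

definition delete_set :: "'a graph \<Rightarrow> 'a set \<Rightarrow> 'a graph" where
  "delete_set G X = (verts G - X, {e \<in> edges G. e \<inter> X = {}})"

end

theory Submission
  imports Defs "HOL-Library.Ramsey"
begin

definition adj :: "'a graph \<Rightarrow> 'a \<Rightarrow> 'a \<Rightarrow> bool" where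
  "adj H x y \<longleftrightarrow> {x, y} \<in> edges H"

lemma adj_sym: "adj H x y = adj H y x"
  by (simp add: adj_def insert_commute)

lemma adj_irrefl: "wf_graph H \<Longrightarrow> \<not> adj H x x"
  unfolding adj_def wf_graph_def by (metis doubleton_eq_iff insert_absorb2)

lemma adj_verts: "wf_graph H \<Longrightarrow> adj H x y \<Longrightarrow> x \<in> verts H \<and> y \<in> verts H"
  unfolding adj_def wf_graph_def by (metis doubleton_eq_iff)

lemma edge_form: "wf_graph H \<Longrightarrow> e \<in> edges H \<Longrightarrow> \<exists>x y. e = {x, y} \<and> adj H x y"
  unfolding adj_def wf_graph_def by metis

definition qg :: "'a graph \<Rightarrow> 'a set \<Rightarrow> ('a \<Rightarrow> 'a) \<Rightarrow> 'a graph" where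
  "qg H W p = (p ` W, {{p x, p y} | x y. x \<in> W \<and> y \<in> W \<and> adj H x y})"

lemma reach_delete_set:
  assumes "finite D" "D \<subseteq> verts H"
  shows "proj_reach H (verts H - D, {e \<in> edges H. e \<inter> D = {}})"
  using assms
proof (induction D rule: finite_induct)
  case empty
  have "(verts H - {}, {e \<in> edges H. e \<inter> {} = {}}) = H"
    by (simp add: verts_def edges_def)
  then show ?case using proj_reach.refl by metis
next
  case (insert x D)
  then have r: "proj_reach H (verts H - D, {e \<in> edges H. e \<inter> D = {}})" by auto
  have xv: "x \<in> verts (verts H - D, {e \<in> edges H. e \<inter> D = {}})"
    using insert by (auto simp: verts_def)
  have "delete_vertex (verts H - D, {e \<in> edges H. e \<inter> D = {}}) x
     = (verts H - insert x D, {e \<in> edges H. e \<inter> insert x D = {}})"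
    by (auto simp: delete_vertex_def verts_def edges_def)
  then show ?case using proj_reach.del[OF r xv] by metis
qed

lemma reach_id:
  assumes wf: "wf_graph H" and W: "W \<subseteq> verts H"
  shows "proj_reach H (qg H W id)"
proof -
  have fin: "finite (verts H - W)" using wf by (simp add: wf_graph_def)
  have eq: "(verts H - (verts H - W), {e \<in> edges H. e \<inter> (verts H - W) = {}}) = qg H W id"
  proof -
    have "verts H - (verts H - W) = W" using W by auto
    moreover have "{e \<in> edges H. e \<inter> (verts H - W) = {}} = {{id x, id y} | x y. x \<in> W \<and> y \<in> W \<and> adj H x y}"
    proof (rule set_eqI, rule iffI)
      fix e assume "e \<in> {e \<in> edges H. e \<inter> (verts H - W) = {}}"
      then obtain x y where "e = {x,y}" "adj H x y" "e \<inter> (verts H - W) = {}"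
        using edge_form[OF wf] by blast
      moreover then have "x \<in> verts H" "y \<in> verts H" using adj_verts[OF wf] by auto
      ultimately show "e \<in> {{id x, id y} | x y. x \<in> W \<and> y \<in> W \<and> adj H x y}" by auto
    next
      fix e assume "e \<in> {{id x, id y} | x y. x \<in> W \<and> y \<in> W \<and> adj H x y}"
      then show "e \<in> {e \<in> edges H. e \<inter> (verts H - W) = {}}" by (auto simp: adj_def)
    qed
    ultimately show ?thesis by (simp add: qg_def)
  qed
  show ?thesis using reach_delete_set[OF fin, of H] eq by auto
qed

definition validp :: "'a graph \<Rightarrow> 'a set \<Rightarrow> ('a \<Rightarrow> 'a) \<Rightarrow> bool" where
  "validp H W p \<longleftrightarrow> (\<forall>x\<in>W. p x \<in> W) \<and> (\<forall>x\<in>W. p (p x) = p x) \<and>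
     (\<forall>x\<in>W. \<forall>y\<in>W. p x = p y \<longrightarrow> \<not> adj H x y)"

lemma step_quot:
  assumes wf: "wf_graph H" and vp: "validp H W p" and vW: "v \<in> W" and pv: "p v \<noteq> v"
  defines "p' \<equiv> p(v := v)"
  shows "validp H W p'" and "p v \<in> verts (qg H W p')" and "v \<in> verts (qg H W p')"
    and "{p v, v} \<notin> edges (qg H W p')" and "identify (qg H W p') (p v) v = qg H W p"
proof -
  have A: "\<forall>x\<in>W. p x \<in> W" and B: "\<forall>x\<in>W. p (p x) = p x"
    and C: "\<forall>x\<in>W. \<forall>y\<in>W. p x = p y \<longrightarrow> \<not> adj H x y" using vp by (auto simp: validp_def)
  have nv: "p x \<noteq> v" if "x \<in> W" for x
    using B that pv by (metis)
  have p'x: "p' x = (if x = v then v else p x)" for x by (simp add: p'_def)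
  have p'v: "p' x = v \<longleftrightarrow> x = v" if "x \<in> W" for x using nv[OF that] by (simp add: p'x)
  show "validp H W p'"
    unfolding validp_def
  proof (intro conjI ballI impI)
    fix x assume "x \<in> W" then show "p' x \<in> W" using A vW by (simp add: p'x)
  next
    fix x assume "x \<in> W" then show "p' (p' x) = p' x" using B nv by (simp add: p'x)
  next
    fix x y assume xy: "x \<in> W" "y \<in> W" "p' x = p' y"
    show "\<not> adj H x y"
    proof (cases "x = v \<or> y = v")
      case True
      then have "x = v \<and> y = v" using xy p'v by metis
      then show ?thesis using adj_irrefl[OF wf] by auto
    next
      case False then show ?thesis using xy C by (simp add: p'x)
    qed
  qed
  show "p v \<in> verts (qg H W p')"
    using A vW pv B by (auto simp: qg_def verts_def p'x image_iff intro!: bexI[of _ "p v"])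
  show "v \<in> verts (qg H W p')"
    using vW by (auto simp: qg_def verts_def p'x)
  show "{p v, v} \<notin> edges (qg H W p')"
  proof
    assume "{p v, v} \<in> edges (qg H W p')"
    then obtain x y where xy: "x \<in> W" "y \<in> W" "adj H x y" "{p v, v} = {p' x, p' y}"
      by (auto simp: qg_def edges_def)
    then have "(p' x = p v \<and> p' y = v) \<or> (p' x = v \<and> p' y = p v)"
      by (metis doubleton_eq_iff)
    then show False
    proof
      assume h: "p' x = p v \<and> p' y = v"
      then have "y = v" using p'v xy by auto
      moreover have "x \<noteq> v" using h pv by (auto simp: p'x)
      ultimately have "p x = p y" using h by (simp add: p'x)
      then show False using C xy by auto
    next
      assume h: "p' x = v \<and> p' y = p v"
      then have "x = v" using p'v xy by auto
      moreover have "y \<noteq> v" using h pv by (auto simp: p'x)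
      ultimately have "p x = p y" using h by (simp add: p'x)
      then show False using C xy by auto
    qed
  qed
  have V: "p' ` W - {v} = p ` W"
  proof
    show "p' ` W - {v} \<subseteq> p ` W" by (auto simp: p'x)
    show "p ` W \<subseteq> p' ` W - {v}"
    proof
      fix z assume "z \<in> p ` W"
      then obtain x where x: "x \<in> W" "z = p x" by auto
      have "z \<noteq> v" using nv x by auto
      moreover have "z \<in> p' ` W"
      proof (cases "x = v")
        case True
        then have "p' (p v) = z" using x pv B by (simp add: p'x)
        then show ?thesis using A x True by (metis image_eqI)
      next
        case False then show ?thesis using x by (auto simp: p'x)
      qed
      ultimately show "z \<in> p' ` W - {v}" by auto
    qed
  qed
  have E: "{e \<in> snd (qg H W p'). v \<notin> e} \<union> {{p v, w} | w. {v, w} \<in> snd (qg H W p')}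
        = {{p x, p y} | x y. x \<in> W \<and> y \<in> W \<and> adj H x y}"
  proof (rule set_eqI, rule iffI)
    fix e assume "e \<in> {e \<in> snd (qg H W p'). v \<notin> e} \<union> {{p v, w} | w. {v, w} \<in> snd (qg H W p')}"
    then show "e \<in> {{p x, p y} | x y. x \<in> W \<and> y \<in> W \<and> adj H x y}"
    proof
      assume "e \<in> {e \<in> snd (qg H W p'). v \<notin> e}"
      then obtain x y where xy: "x \<in> W" "y \<in> W" "adj H x y" "e = {p' x, p' y}" "v \<notin> e"
        by (auto simp: qg_def)
      then have "x \<noteq> v" "y \<noteq> v" by (auto simp: p'x)
      then show ?thesis using xy by (auto simp: p'x)
    next
      assume "e \<in> {{p v, w} | w. {v, w} \<in> snd (qg H W p')}"
      then obtain w x y where xy: "e = {p v, w}" "x \<in> W" "y \<in> W" "adj H x y" "{v, w} = {p' x, p' y}"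
        by (auto simp: qg_def)
      then have "(p' x = v \<and> p' y = w) \<or> (p' x = w \<and> p' y = v)"
        by (metis doubleton_eq_iff)
      then show ?thesis
      proof
        assume h: "p' x = v \<and> p' y = w"
        then have "x = v" using p'v xy by auto
        then have "y \<noteq> v" using xy adj_irrefl[OF wf] by auto
        then have "e = {p x, p y}" using h xy \<open>x = v\<close> by (simp add: p'x)
        then show ?thesis using xy by auto
      next
        assume h: "p' x = w \<and> p' y = v"
        then have "y = v" using p'v xy by auto
        then have "x \<noteq> v" using xy adj_irrefl[OF wf] by auto
        then have "e = {p y, p x}" using h xy \<open>y = v\<close> by (simp add: p'x)
        moreover have "adj H y x" using xy adj_sym by metis
        ultimately show ?thesis using xy by auto
      qed
    qed
  next
    fix e assume "e \<in> {{p x, p y} | x y. x \<in> W \<and> y \<in> W \<and> adj H x y}"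
    then obtain x y where xy: "x \<in> W" "y \<in> W" "adj H x y" "e = {p x, p y}" by auto
    show "e \<in> {e \<in> snd (qg H W p'). v \<notin> e} \<union> {{p v, w} | w. {v, w} \<in> snd (qg H W p')}"
    proof (cases "x = v \<or> y = v")
      case False
      then have "e = {p' x, p' y}" using xy by (simp add: p'x)
      moreover have "v \<notin> e" using xy nv by auto
      ultimately show ?thesis using xy by (auto simp: qg_def)
    next
      case True
      then show ?thesis
      proof
        assume "x = v"
        then have yv: "y \<noteq> v" using xy adj_irrefl[OF wf] by auto
        have "{p' v, p' y} \<in> snd (qg H W p')"
          using xy \<open>x = v\<close> unfolding qg_def by auto
        then have "{v, p' y} \<in> snd (qg H W p')" by (simp add: p'x)
        moreover have "e = {p v, p' y}" using xy \<open>x = v\<close> yv by (simp add: p'x)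
        ultimately show ?thesis by auto
      next
        assume "y = v"
        then have xv: "x \<noteq> v" using xy adj_irrefl[OF wf] by auto
        have "adj H y x" using xy adj_sym by metis
        then have "{p' v, p' x} \<in> snd (qg H W p')"
          using xy \<open>y = v\<close> unfolding qg_def by auto
        then have "{v, p' x} \<in> snd (qg H W p')" by (simp add: p'x)
        moreover have "e = {p v, p' x}" using xy \<open>y = v\<close> xv by (auto simp: p'x)
        ultimately show ?thesis by auto
      qed
    qed
  qed
  show "identify (qg H W p') (p v) v = qg H W p"
    unfolding identify_def using V E by (simp add: qg_def verts_def edges_def)
qed

lemma reach_quot:
  assumes wf: "wf_graph H" and W: "W \<subseteq> verts H"
  shows "validp H W p \<Longrightarrow> proj_reach H (qg H W p)"
proof (induction "card {x\<in>W. p x \<noteq> x}" arbitrary: p)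
  case 0
  have finW: "finite W" using W wf finite_subset by (auto simp: wf_graph_def)
  then have "{x\<in>W. p x \<noteq> x} = {}" using 0 by simp
  then have px: "\<forall>x\<in>W. p x = x" by auto
  have "qg H W p = qg H W id"
  proof -
    have "p ` W = id ` W" using px by auto
    moreover have "{{p x, p y} | x y. x \<in> W \<and> y \<in> W \<and> adj H x y} = {{id x, id y} | x y. x \<in> W \<and> y \<in> W \<and> adj H x y}"
      using px by (intro Collect_cong iffI; clarsimp; metis)
    ultimately show ?thesis by (simp add: qg_def)
  qed
  then show ?case using reach_id[OF wf W] by simp
next
  case (Suc n)
  have finW: "finite W" using W wf finite_subset by (auto simp: wf_graph_def)
  then have "{x\<in>W. p x \<noteq> x} \<noteq> {}" using Suc(2) by (intro notI) simp
  then obtain v where v: "v \<in> W" "p v \<noteq> v" by auto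
  define p' where "p' = p(v := v)"
  have "{x\<in>W. p' x \<noteq> x} = {x\<in>W. p x \<noteq> x} - {v}" by (auto simp: p'_def)
  then have "card {x\<in>W. p' x \<noteq> x} = n" using Suc(2) v finW by simp
  moreover have vp': "validp H W p'" using step_quot[OF wf Suc(3) v] by (simp add: p'_def)
  ultimately have r: "proj_reach H (qg H W p')" using Suc(1) by blast
  have "proj_reach H (identify (qg H W p') (p v) v)"
    apply (rule proj_reach.ident[OF r])
    using step_quot[OF wf Suc(3) v] v by (simp_all add: p'_def)
  then show ?case using step_quot[OF wf Suc(3) v] by (simp add: p'_def)
qed

lemma quotient_proj:
  fixes T :: "'b graph" and C :: "'b \<Rightarrow> 'a set" and H :: "'a graph"
  assumes wf: "wf_graph H"
    and sub: "\<forall>j\<in>verts T. C j \<subseteq> verts H \<and> C j \<noteq> {}"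
    and ind: "\<forall>j\<in>verts T. \<forall>x\<in>C j. \<forall>y\<in>C j. \<not> adj H x y"
    and disj: "\<forall>i\<in>verts T. \<forall>j\<in>verts T. i \<noteq> j \<longrightarrow> C i \<inter> C j = {}"
    and edg: "\<forall>i\<in>verts T. \<forall>j\<in>verts T. ({i,j} \<in> edges T \<longleftrightarrow> i \<noteq> j \<and> (\<exists>x\<in>C i. \<exists>y\<in>C j. adj H x y))"
  shows "is_projection T H"
proof -
  define J where "J = verts T"
  define r where "r j = (SOME x. x \<in> C j)" for j
  define idx where "idx x = (THE j. j \<in> J \<and> x \<in> C j)" for x
  define W where "W = \<Union> (C ` J)"
  define p where "p x = r (idx x)" for x
  have rC: "r j \<in> C j" if "j \<in> J" for j
    using sub that unfolding r_def J_def by (simp add: some_in_eq)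
  have idx: "idx x = j" if "j \<in> J" "x \<in> C j" for x j
    unfolding idx_def
  proof (rule the_equality)
    show "j \<in> J \<and> x \<in> C j" using that by simp
    fix j' assume "j' \<in> J \<and> x \<in> C j'"
    then show "j' = j" using disj that unfolding J_def by blast
  qed
  have idxr: "idx (r j) = j" if "j \<in> J" for j using idx rC that by auto
  have WH: "W \<subseteq> verts H" using sub by (auto simp: W_def J_def)
  have vp: "validp H W p"
    unfolding validp_def
  proof (intro conjI ballI impI)
    fix x assume "x \<in> W"
    then obtain j where j: "j \<in> J" "x \<in> C j" by (auto simp: W_def)
    show "p x \<in> W" using j rC idx by (auto simp: p_def W_def)
    show "p (p x) = p x" using j idxr idx by (simp add: p_def)
  next
    fix x y assume "x \<in> W" "y \<in> W" "p x = p y"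
    then obtain i j where ij: "i \<in> J" "x \<in> C i" "j \<in> J" "y \<in> C j" "r i = r j"
      using idx by (auto simp: W_def p_def)
    have "i = idx (r i)" using idxr[OF ij(1)] by simp
    also have "\<dots> = idx (r j)" using ij(5) by simp
    also have "\<dots> = j" using idxr[OF ij(3)] .
    finally have "i = j" .
    then show "\<not> adj H x y" using ind ij J_def by auto
  qed
  have R: "proj_reach H (qg H W p)" using reach_quot[OF wf WH vp] .
  have pW: "p ` W = r ` J"
  proof
    show "p ` W \<subseteq> r ` J" using idx by (auto simp: W_def p_def)
    show "r ` J \<subseteq> p ` W"
    proof
      fix z assume "z \<in> r ` J"
      then obtain j where j: "j \<in> J" "z = r j" by auto
      then have "p (r j) = z" using idxr by (simp add: p_def)
      moreover have "r j \<in> W" using rC j by (auto simp: W_def)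
      ultimately show "z \<in> p ` W" by (metis image_eqI)
    qed
  qed
  have bij: "bij_betw idx (verts (qg H W p)) (verts T)"
  proof -
    have "inj_on idx (r ` J)" by (rule inj_onI) (auto simp: idxr)
    moreover have "idx ` (r ` J) = J" using idxr by (auto simp: image_iff)
    ultimately show ?thesis using pW by (simp add: bij_betw_def qg_def verts_def J_def)
  qed
  have iso: "\<forall>a\<in>verts (qg H W p). \<forall>b\<in>verts (qg H W p).
      {a, b} \<in> edges (qg H W p) \<longleftrightarrow> {idx a, idx b} \<in> edges T"
  proof (intro ballI)
    fix a b assume "a \<in> verts (qg H W p)" "b \<in> verts (qg H W p)"
    then obtain i j where ij: "i \<in> J" "j \<in> J" "a = r i" "b = r j"
      using pW by (auto simp: qg_def verts_def)
    show "{a, b} \<in> edges (qg H W p) \<longleftrightarrow> {idx a, idx b} \<in> edges T"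
    proof
      assume "{a, b} \<in> edges (qg H W p)"
      then obtain x y where xy: "x \<in> W" "y \<in> W" "adj H x y" "{a, b} = {p x, p y}"
        by (auto simp: qg_def edges_def)
      then obtain i' j' where i'j': "i' \<in> J" "x \<in> C i'" "j' \<in> J" "y \<in> C j'"
        by (auto simp: W_def)
      then have "p x = r i'" "p y = r j'" using idx by (auto simp: p_def)
      then have "{r i, r j} = {r i', r j'}" using xy ij by simp
      then have "(r i = r i' \<and> r j = r j') \<or> (r i = r j' \<and> r j = r i')"
        by (simp add: doubleton_eq_iff)
      then have "(i = i' \<and> j = j') \<or> (i = j' \<and> j = i')"
        using idxr[OF ij(1)] idxr[OF ij(2)] idxr[OF i'j'(1)] idxr[OF i'j'(3)] by metis
      then have "{i, j} = {i', j'}" by auto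
      moreover have "i' \<noteq> j'" using i'j' ind xy J_def by auto
      ultimately have "{i, j} \<in> edges T" using edg i'j' xy J_def by auto
      then show "{idx a, idx b} \<in> edges T" using ij idxr by simp
    next
      assume "{idx a, idx b} \<in> edges T"
      then have "{i, j} \<in> edges T" using ij idxr by simp
      then obtain x y where xy: "i \<noteq> j" "x \<in> C i" "y \<in> C j" "adj H x y"
        using edg ij J_def by blast
      then have "x \<in> W" "y \<in> W" using ij by (auto simp: W_def)
      moreover have "p x = a" "p y = b" using idx xy ij by (auto simp: p_def)
      ultimately show "{a, b} \<in> edges (qg H W p)"
        using xy by (auto simp: qg_def edges_def)
    qed
  qed
  have "graph_iso (qg H W p) T" unfolding graph_iso_def using bij iso by blast
  then show ?thesis unfolding is_projection_def using R by blast
qed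

lemma Kt_family:
  fixes C :: "nat \<Rightarrow> 'a set" and H :: "'a graph"
  assumes wf: "wf_graph H"
    and sub: "\<And>i. i < t \<Longrightarrow> C i \<subseteq> verts H" and ne: "\<And>i. i < t \<Longrightarrow> C i \<noteq> {}"
    and ind: "\<And>i x y. i < t \<Longrightarrow> x \<in> C i \<Longrightarrow> y \<in> C i \<Longrightarrow> \<not> adj H x y"
    and disj: "\<And>i j. i < t \<Longrightarrow> j < t \<Longrightarrow> i \<noteq> j \<Longrightarrow> C i \<inter> C j = {}"
    and edg: "\<And>i j. i < t \<Longrightarrow> j < t \<Longrightarrow> i < j \<Longrightarrow> \<exists>x\<in>C i. \<exists>y\<in>C j. adj H x y"
  shows "is_projection (complete_graph t) H"
proof (rule quotient_proj[OF wf, where C = C])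
  have V: "verts (complete_graph t) = {0..<t}" by (simp add: complete_graph_def verts_def)
  show "\<forall>j\<in>verts (complete_graph t). C j \<subseteq> verts H \<and> C j \<noteq> {}" using sub ne V by auto
  show "\<forall>j\<in>verts (complete_graph t). \<forall>x\<in>C j. \<forall>y\<in>C j. \<not> adj H x y" using ind V by auto
  show "\<forall>i\<in>verts (complete_graph t). \<forall>j\<in>verts (complete_graph t). i \<noteq> j \<longrightarrow> C i \<inter> C j = {}"
    using disj V by auto
  show "\<forall>i\<in>verts (complete_graph t). \<forall>j\<in>verts (complete_graph t).
      ({i, j} \<in> edges (complete_graph t) \<longleftrightarrow> i \<noteq> j \<and> (\<exists>x\<in>C i. \<exists>y\<in>C j. adj H x y))"
  proof (intro ballI)
    fix i j assume ij: "i \<in> verts (complete_graph t)" "j \<in> verts (complete_graph t)"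
    have "{i, j} \<in> edges (complete_graph t) \<longleftrightarrow> i \<noteq> j"
      using ij V by (auto simp: complete_graph_def edges_def doubleton_eq_iff)
    moreover have "i \<noteq> j \<Longrightarrow> \<exists>x\<in>C i. \<exists>y\<in>C j. adj H x y"
    proof -
      assume "i \<noteq> j"
      then consider "i < j" | "j < i" by linarith
      then show ?thesis
      proof cases
        case 1 then show ?thesis using edg ij V by auto
      next
        case 2 then obtain x y where "x \<in> C j" "y \<in> C i" "adj H x y" using edg ij V by force
        then show ?thesis using adj_sym by metis
      qed
    qed
    ultimately show "({i, j} \<in> edges (complete_graph t) \<longleftrightarrow> i \<noteq> j \<and> (\<exists>x\<in>C i. \<exists>y\<in>C j. adj H x y))"
      by blast
  qed
qed

lemma Kttt_family:
  fixes C :: "nat \<times> nat \<Rightarrow> 'a set" and H :: "'a graph"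
  assumes wf: "wf_graph H"
    and sub: "\<And>i. i \<in> {0..<3} \<times> {0..<t} \<Longrightarrow> C i \<subseteq> verts H"
    and ne: "\<And>i. i \<in> {0..<3} \<times> {0..<t} \<Longrightarrow> C i \<noteq> {}"
    and disj: "\<And>i j. i \<in> {0..<3} \<times> {0..<t} \<Longrightarrow> j \<in> {0..<3} \<times> {0..<t} \<Longrightarrow> i \<noteq> j \<Longrightarrow> C i \<inter> C j = {}"
    and nedg: "\<And>i j x y. i \<in> {0..<3} \<times> {0..<t} \<Longrightarrow> j \<in> {0..<3} \<times> {0..<t} \<Longrightarrow> fst i = fst j
       \<Longrightarrow> x \<in> C i \<Longrightarrow> y \<in> C j \<Longrightarrow> \<not> adj H x y"
    and edg: "\<And>i j. i \<in> {0..<3} \<times> {0..<t} \<Longrightarrow> j \<in> {0..<3} \<times> {0..<t} \<Longrightarrow> fst i \<noteq> fst j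
       \<Longrightarrow> \<exists>x\<in>C i. \<exists>y\<in>C j. adj H x y"
  shows "is_projection (complete_tripartite t) H"
proof (rule quotient_proj[OF wf, where C = C])
  have V: "verts (complete_tripartite t) = {0..<3} \<times> {0..<t}" by (simp add: complete_tripartite_def verts_def)
  show "\<forall>j\<in>verts (complete_tripartite t). C j \<subseteq> verts H \<and> C j \<noteq> {}" using sub ne V by auto
  show "\<forall>j\<in>verts (complete_tripartite t). \<forall>x\<in>C j. \<forall>y\<in>C j. \<not> adj H x y" using nedg V by auto
  show "\<forall>i\<in>verts (complete_tripartite t). \<forall>j\<in>verts (complete_tripartite t). i \<noteq> j \<longrightarrow> C i \<inter> C j = {}"
    using disj V by auto
  show "\<forall>i\<in>verts (complete_tripartite t). \<forall>j\<in>verts (complete_tripartite t).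
      ({i, j} \<in> edges (complete_tripartite t) \<longleftrightarrow> i \<noteq> j \<and> (\<exists>x\<in>C i. \<exists>y\<in>C j. adj H x y))"
  proof (intro ballI)
    fix i j assume ij: "i \<in> verts (complete_tripartite t)" "j \<in> verts (complete_tripartite t)"
    have "{i, j} \<in> edges (complete_tripartite t) \<longleftrightarrow> fst i \<noteq> fst j"
    proof
      assume "{i, j} \<in> edges (complete_tripartite t)"
      then show "fst i \<noteq> fst j" by (auto simp: complete_tripartite_def edges_def doubleton_eq_iff)
    next
      assume "fst i \<noteq> fst j"
      then have "{i, j} \<in> {{x, y} | x y. x \<in> {0..<3} \<times> {0..<t} \<and> y \<in> {0..<3} \<times> {0..<t} \<and> fst x \<noteq> fst y}"
        using ij V by blast
      then show "{i, j} \<in> edges (complete_tripartite t)" by (simp add: complete_tripartite_def edges_def)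
    qed
    moreover have "fst i \<noteq> fst j \<longleftrightarrow> i \<noteq> j \<and> (\<exists>x\<in>C i. \<exists>y\<in>C j. adj H x y)"
    proof
      assume "fst i \<noteq> fst j"
      then show "i \<noteq> j \<and> (\<exists>x\<in>C i. \<exists>y\<in>C j. adj H x y)" using edg[of i j] ij V by auto
    next
      assume "i \<noteq> j \<and> (\<exists>x\<in>C i. \<exists>y\<in>C j. adj H x y)"
      then obtain x y where "x \<in> C i" "y \<in> C j" "adj H x y" by blast
      then show "fst i \<noteq> fst j" using nedg[of i j x y] ij V by auto
    qed
    ultimately show "({i, j} \<in> edges (complete_tripartite t) \<longleftrightarrow> i \<noteq> j \<and> (\<exists>x\<in>C i. \<exists>y\<in>C j. adj H x y))"
      by blast
  qed
qed

lemma pair_family: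
  fixes x y :: "nat \<Rightarrow> 'a" and H :: "'a graph"
  assumes wf: "wf_graph H"
    and xv: "\<And>i. i < t \<Longrightarrow> x i \<in> verts H" and yv: "\<And>i. i < t \<Longrightarrow> y i \<in> verts H"
    and nxy: "\<And>i. i < t \<Longrightarrow> \<not> adj H (x i) (y i)"
    and xinj: "\<And>i j. i < t \<Longrightarrow> j < t \<Longrightarrow> x i = x j \<Longrightarrow> i = j"
    and yinj: "\<And>i j. i < t \<Longrightarrow> j < t \<Longrightarrow> y i = y j \<Longrightarrow> i = j"
    and xy: "\<And>i j. i < t \<Longrightarrow> j < t \<Longrightarrow> x i \<noteq> y j"
    and e: "\<And>i j. i < j \<Longrightarrow> j < t \<Longrightarrow> adj H (x i) (y j) \<or> adj H (y i) (x j)"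
  shows "is_projection (complete_graph t) H"
proof (rule Kt_family[OF wf, where C = "\<lambda>i. {x i, y i}"])
  show "\<And>i. i < t \<Longrightarrow> {x i, y i} \<subseteq> verts H" using xv yv by auto
  show "\<And>i. i < t \<Longrightarrow> {x i, y i} \<noteq> {}" by auto
  show "\<And>i a b. i < t \<Longrightarrow> a \<in> {x i, y i} \<Longrightarrow> b \<in> {x i, y i} \<Longrightarrow> \<not> adj H a b"
  proof -
    fix i a b assume i: "i < t" and ab: "a \<in> {x i, y i}" "b \<in> {x i, y i}"
    have "\<not> adj H (x i) (y i)" "\<not> adj H (y i) (x i)" using nxy[OF i] adj_sym by metis+
    moreover have "\<not> adj H (x i) (x i)" "\<not> adj H (y i) (y i)" using adj_irrefl[OF wf] by auto
    ultimately show "\<not> adj H a b" using ab by auto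
  qed
  show "\<And>i j. i < t \<Longrightarrow> j < t \<Longrightarrow> i \<noteq> j \<Longrightarrow> {x i, y i} \<inter> {x j, y j} = {}"
  proof -
    fix i j assume ij: "i < t" "j < t" "i \<noteq> j"
    have "x i \<noteq> x j" "y i \<noteq> y j" using xinj[OF ij(1,2)] yinj[OF ij(1,2)] ij(3) by auto
    moreover have "x i \<noteq> y j" "y i \<noteq> x j" using xy ij by (metis, metis)
    ultimately show "{x i, y i} \<inter> {x j, y j} = {}" by auto
  qed
  show "\<And>i j. i < t \<Longrightarrow> j < t \<Longrightarrow> i < j \<Longrightarrow> \<exists>a\<in>{x i, y i}. \<exists>b\<in>{x j, y j}. adj H a b"
  proof -
    fix i j assume "i < t" "j < t" "i < j"
    then have "adj H (x i) (y j) \<or> adj H (y i) (x j)" using e by auto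
    then show "\<exists>a\<in>{x i, y i}. \<exists>b\<in>{x j, y j}. adj H a b" by auto
  qed
qed

lemma matching_family:
  fixes p q :: "nat \<Rightarrow> 'a" and H :: "'a graph"
  assumes wf: "wf_graph H"
    and pv: "\<And>k. k < t*t \<Longrightarrow> p k \<in> verts H" and qv: "\<And>k. k < t*t \<Longrightarrow> q k \<in> verts H"
    and pinj: "\<And>k l. k < t*t \<Longrightarrow> l < t*t \<Longrightarrow> p k = p l \<Longrightarrow> k = l"
    and qinj: "\<And>k l. k < t*t \<Longrightarrow> l < t*t \<Longrightarrow> q k = q l \<Longrightarrow> k = l"
    and pq: "\<And>k l. k < t*t \<Longrightarrow> l < t*t \<Longrightarrow> p k \<noteq> q l"
    and pp: "\<And>k l. k < t*t \<Longrightarrow> l < t*t \<Longrightarrow> \<not> adj H (p k) (p l)"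
    and qq: "\<And>k l. k < t*t \<Longrightarrow> l < t*t \<Longrightarrow> \<not> adj H (q k) (q l)"
    and pqa: "\<And>k l. k < t*t \<Longrightarrow> l < t*t \<Longrightarrow> adj H (p k) (q l) \<longleftrightarrow> k = l"
  shows "is_projection (complete_graph t) H"
proof (rule Kt_family[OF wf, where C = "\<lambda>i. p ` {k. k < t*t \<and> k div t = i \<and> i \<le> k mod t}
     \<union> q ` {k. k < t*t \<and> k mod t = i \<and> k div t < i}"])
  show "\<And>i. i < t \<Longrightarrow> p ` {k. k < t*t \<and> k div t = i \<and> i \<le> k mod t}
     \<union> q ` {k. k < t*t \<and> k mod t = i \<and> k div t < i} \<subseteq> verts H" using pv qv by auto
  show "\<And>i. i < t \<Longrightarrow> p ` {k. k < t*t \<and> k div t = i \<and> i \<le> k mod t}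
     \<union> q ` {k. k < t*t \<and> k mod t = i \<and> k div t < i} \<noteq> {}"
  proof -
    fix i assume i: "i < t"
    have "i * t + i < t * t"
    proof -
      have "i * t + i < i * t + t" using i by simp
      also have "\<dots> = (i+1) * t" by simp
      also have "\<dots> \<le> t * t" using i by (intro mult_le_mono1) simp
      finally show ?thesis .
    qed
    moreover have "(i*t+i) div t = i" "(i*t+i) mod t = i" using i by auto
    ultimately show "p ` {k. k < t*t \<and> k div t = i \<and> i \<le> k mod t}
     \<union> q ` {k. k < t*t \<and> k mod t = i \<and> k div t < i} \<noteq> {}" by auto
  qed
  show "\<And>i a b. i < t \<Longrightarrow> a \<in> p ` {k. k < t*t \<and> k div t = i \<and> i \<le> k mod t}
     \<union> q ` {k. k < t*t \<and> k mod t = i \<and> k div t < i} \<Longrightarrow> b \<in> p ` {k. k < t*t \<and> k div t = i \<and> i \<le> k mod t}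
     \<union> q ` {k. k < t*t \<and> k mod t = i \<and> k div t < i} \<Longrightarrow> \<not> adj H a b"
  proof -
    fix i a b assume i: "i < t" and a: "a \<in> p ` {k. k < t*t \<and> k div t = i \<and> i \<le> k mod t}
     \<union> q ` {k. k < t*t \<and> k mod t = i \<and> k div t < i}" and b: "b \<in> p ` {k. k < t*t \<and> k div t = i \<and> i \<le> k mod t}
     \<union> q ` {k. k < t*t \<and> k mod t = i \<and> k div t < i}"
    have pqn: "\<not> adj H (p k) (q l)" if "k < t*t" "k div t = i" "l < t*t" "l div t < i" for k l
      using pqa[OF that(1) that(3)] that by auto
    from a b show "\<not> adj H a b"
    proof (elim UnE imageE)
      fix k l assume "a = p k" "k \<in> {k. k < t*t \<and> k div t = i \<and> i \<le> k mod t}"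
        "b = p l" "l \<in> {k. k < t*t \<and> k div t = i \<and> i \<le> k mod t}"
      then show ?thesis using pp[of k l] by auto
    next
      fix k l assume "a = p k" "k \<in> {k. k < t*t \<and> k div t = i \<and> i \<le> k mod t}"
        "b = q l" "l \<in> {k. k < t*t \<and> k mod t = i \<and> k div t < i}"
      then show ?thesis using pqn[of k l] by auto
    next
      fix k l assume "a = q k" "k \<in> {k. k < t*t \<and> k mod t = i \<and> k div t < i}"
        "b = p l" "l \<in> {k. k < t*t \<and> k div t = i \<and> i \<le> k mod t}"
      then have "\<not> adj H (p l) (q k)" using pqn[of l k] by auto
      then show ?thesis using \<open>a = q k\<close> \<open>b = p l\<close> by (simp add: adj_sym)
    next
      fix k l assume "a = q k" "k \<in> {k. k < t*t \<and> k mod t = i \<and> k div t < i}"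
        "b = q l" "l \<in> {k. k < t*t \<and> k mod t = i \<and> k div t < i}"
      then show ?thesis using qq[of k l] by auto
    qed
  qed
  show "\<And>i j. i < t \<Longrightarrow> j < t \<Longrightarrow> i \<noteq> j \<Longrightarrow> (p ` {k. k < t*t \<and> k div t = i \<and> i \<le> k mod t}
     \<union> q ` {k. k < t*t \<and> k mod t = i \<and> k div t < i}) \<inter> (p ` {k. k < t*t \<and> k div t = j \<and> j \<le> k mod t}
     \<union> q ` {k. k < t*t \<and> k mod t = j \<and> k div t < j}) = {}"
  proof -
    fix i j assume ij: "i < t" "j < t" "i \<noteq> j"
    show "(p ` {k. k < t*t \<and> k div t = i \<and> i \<le> k mod t}
     \<union> q ` {k. k < t*t \<and> k mod t = i \<and> k div t < i}) \<inter> (p ` {k. k < t*t \<and> k div t = j \<and> j \<le> k mod t}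
     \<union> q ` {k. k < t*t \<and> k mod t = j \<and> k div t < j}) = {}"
    proof (rule equals0I, elim IntE UnE imageE)
      fix z k l assume "z = p k" "k \<in> {k. k < t*t \<and> k div t = i \<and> i \<le> k mod t}"
        "z = p l" "l \<in> {k. k < t*t \<and> k div t = j \<and> j \<le> k mod t}"
      then have "k = l" using pinj by auto
      then show False using ij \<open>k \<in> _\<close> \<open>l \<in> _\<close> by auto
    next
      fix z k l assume "z = p k" "k \<in> {k. k < t*t \<and> k div t = i \<and> i \<le> k mod t}"
        "z = q l" "l \<in> {k. k < t*t \<and> k mod t = j \<and> k div t < j}"
      then show False using pq[of k l] by auto
    next
      fix z k l assume "z = q k" "k \<in> {k. k < t*t \<and> k mod t = i \<and> k div t < i}"
        "z = p l" "l \<in> {k. k < t*t \<and> k div t = j \<and> j \<le> k mod t}"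
      then show False using pq[of l k] by auto
    next
      fix z k l assume "z = q k" "k \<in> {k. k < t*t \<and> k mod t = i \<and> k div t < i}"
        "z = q l" "l \<in> {k. k < t*t \<and> k mod t = j \<and> k div t < j}"
      then have "k = l" using qinj by auto
      then show False using ij \<open>k \<in> _\<close> \<open>l \<in> _\<close> by auto
    qed
  qed
  show "\<And>i j. i < t \<Longrightarrow> j < t \<Longrightarrow> i < j \<Longrightarrow> \<exists>a\<in>p ` {k. k < t*t \<and> k div t = i \<and> i \<le> k mod t}
     \<union> q ` {k. k < t*t \<and> k mod t = i \<and> k div t < i}. \<exists>b\<in>p ` {k. k < t*t \<and> k div t = j \<and> j \<le> k mod t}
     \<union> q ` {k. k < t*t \<and> k mod t = j \<and> k div t < j}. adj H a b"
  proof -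
    fix i j assume ij: "i < t" "j < t" "i < j"
    have k: "i * t + j < t * t"
    proof -
      have "i * t + j < i * t + t" using ij by simp
      also have "\<dots> = (i+1) * t" by simp
      also have "\<dots> \<le> t * t" using ij by (intro mult_le_mono1) simp
      finally show ?thesis .
    qed
    have d: "(i*t+j) div t = i" "(i*t+j) mod t = j" using ij by auto
    have "p (i*t+j) \<in> p ` {k. k < t*t \<and> k div t = i \<and> i \<le> k mod t}" using k d ij by auto
    moreover have "q (i*t+j) \<in> q ` {k. k < t*t \<and> k mod t = j \<and> k div t < j}" using k d ij by auto
    moreover have "adj H (p (i*t+j)) (q (i*t+j))" using pqa k by simp
    ultimately show "\<exists>a\<in>p ` {k. k < t*t \<and> k div t = i \<and> i \<le> k mod t}
     \<union> q ` {k. k < t*t \<and> k mod t = i \<and> k div t < i}. \<exists>b\<in>p ` {k. k < t*t \<and> k div t = j \<and> j \<le> k mod t}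
     \<union> q ` {k. k < t*t \<and> k mod t = j \<and> k div t < j}. adj H a b" by blast
  qed
qed

lemma enum_set:
  fixes S :: "nat set"
  assumes "finite S" "card S = m"
  shows "\<exists>s. (\<forall>i j. i < j \<longrightarrow> j < m \<longrightarrow> s i < s j) \<and> (\<forall>i<m. s i \<in> S)"
proof -
  define l where "l = sorted_list_of_set S"
  have len: "length l = m" using assms by (simp add: l_def length_sorted_list_of_set)
  have st: "sorted_wrt (<) l" by (simp add: l_def strict_sorted_list_of_set)
  have set: "set l = S" using assms by (simp add: l_def set_sorted_list_of_set)
  show ?thesis
  proof (intro exI[of _ "\<lambda>i. l ! i"] conjI allI impI)
    fix i j assume "i < j" "j < m" then show "l ! i < l ! j" using sorted_wrt_nth_less[OF st] len by auto
  next
    fix i assume "i < m" then show "l ! i \<in> S" using set len nth_mem by blast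
  qed
qed

lemma ramsey_pairs:
  fixes k m :: nat
  shows "\<exists>N. \<forall>c :: nat \<Rightarrow> nat \<Rightarrow> nat. (\<forall>i j. c i j < k) \<longrightarrow>
     (\<exists>s :: nat \<Rightarrow> nat. (\<forall>i j. i < j \<longrightarrow> j < m \<longrightarrow> s i < s j) \<and> (\<forall>i<m. s i < N) \<and>
        (\<forall>i j i' j'. i < j \<longrightarrow> j < m \<longrightarrow> i' < j' \<longrightarrow> j' < m \<longrightarrow> c (s i) (s j) = c (s i') (s j')))"
proof -
  obtain N :: nat where N: "partn_lst {..<N} (replicate k m) 2" using ramsey_full[of "replicate k m"] by blast
  show ?thesis
  proof (intro exI[of _ N] allI impI)
    fix c :: "nat \<Rightarrow> nat \<Rightarrow> nat" assume cb: "\<forall>i j. c i j < k"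
    define f where "f S = c (Min S) (Max S)" for S :: "nat set"
    have "f \<in> nsets {..<N} 2 \<rightarrow> {..<k}" using cb by (auto simp: f_def)
    then obtain col S where col: "col < length (replicate k m)" and S: "S \<in> nsets {..<N} (replicate k m ! col)"
      and fS: "f ` (nsets S 2) \<subseteq> {col}"
      using partn_lstE[OF N] by (metis length_replicate)
    have S': "finite S" "card S = m" "S \<subseteq> {..<N}" using S col by (auto simp: nsets_def)
    obtain s where s: "\<forall>i j. i < j \<longrightarrow> j < m \<longrightarrow> s i < s j" "\<forall>i<m. s i \<in> S"
      using enum_set[OF S'(1,2)] by blast
    have hom: "c (s i) (s j) = col" if "i < j" "j < m" for i j
    proof -
      have lt: "s i < s j" using s that by auto
      have ne: "s i \<noteq> s j" using lt by simp
      have "{s i, s j} \<subseteq> S" using s that by auto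
      then have "{s i, s j} \<in> nsets S 2" using ne by (simp add: nsets_def)
      then have "f {s i, s j} = col" using fS by blast
      then show ?thesis using lt by (simp add: f_def)
    qed
    show "\<exists>s. (\<forall>i j. i < j \<longrightarrow> j < m \<longrightarrow> s i < s j) \<and> (\<forall>i<m. s i < N) \<and>
        (\<forall>i j i' j'. i < j \<longrightarrow> j < m \<longrightarrow> i' < j' \<longrightarrow> j' < m \<longrightarrow> c (s i) (s j) = c (s i') (s j'))"
      using s S' hom by (intro exI[of _ s]) auto
  qed
qed

lemma ramsey_triples:
  fixes k m :: nat
  shows "\<exists>N. \<forall>c :: nat \<Rightarrow> nat \<Rightarrow> nat \<Rightarrow> nat. (\<forall>i j l. c i j l < k) \<longrightarrow>
     (\<exists>s :: nat \<Rightarrow> nat. (\<forall>i j. i < j \<longrightarrow> j < m \<longrightarrow> s i < s j) \<and> (\<forall>i<m. s i < N) \<and>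
        (\<forall>i j l i' j' l'. i < j \<longrightarrow> j < l \<longrightarrow> l < m \<longrightarrow> i' < j' \<longrightarrow> j' < l' \<longrightarrow> l' < m \<longrightarrow>
           c (s i) (s j) (s l) = c (s i') (s j') (s l')))"
proof -
  obtain N :: nat where N: "partn_lst {..<N} (replicate k m) 3" using ramsey_full[of "replicate k m"] by blast
  show ?thesis
  proof (intro exI[of _ N] allI impI)
    fix c :: "nat \<Rightarrow> nat \<Rightarrow> nat \<Rightarrow> nat" assume cb: "\<forall>i j l. c i j l < k"
    define f where "f S = c (Min S) (Min (S - {Min S})) (Max S)" for S :: "nat set"
    have "f \<in> nsets {..<N} 3 \<rightarrow> {..<k}" using cb by (auto simp: f_def)
    then obtain col S where col: "col < length (replicate k m)" and S: "S \<in> nsets {..<N} (replicate k m ! col)"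
      and fS: "f ` (nsets S 3) \<subseteq> {col}"
      using partn_lstE[OF N] by (metis length_replicate)
    have S': "finite S" "card S = m" "S \<subseteq> {..<N}" using S col by (auto simp: nsets_def)
    obtain s where s: "\<forall>i j. i < j \<longrightarrow> j < m \<longrightarrow> s i < s j" "\<forall>i<m. s i \<in> S"
      using enum_set[OF S'(1,2)] by blast
    have hom: "c (s i) (s j) (s l) = col" if "i < j" "j < l" "l < m" for i j l
    proof -
      have lt: "s i < s j" "s j < s l" using s that by auto
      have ne: "s i \<noteq> s j" "s j \<noteq> s l" "s i \<noteq> s l" using lt by simp_all
      have "{s i, s j, s l} \<subseteq> S" using s that by auto
      then have "{s i, s j, s l} \<in> nsets S 3" using ne by (simp add: nsets_def)
      then have "f {s i, s j, s l} = col" using fS by blast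
      moreover have "Min {s i, s j, s l} = s i" using lt by (simp add: min_def)
      moreover have "{s i, s j, s l} - {s i} = {s j, s l}" using lt by auto
      moreover have "Min {s j, s l} = s j" using lt by (simp add: min_def)
      moreover have "Max {s i, s j, s l} = s l" using lt by (simp add: max_def)
      ultimately show ?thesis by (simp add: f_def)
    qed
    show "\<exists>s. (\<forall>i j. i < j \<longrightarrow> j < m \<longrightarrow> s i < s j) \<and> (\<forall>i<m. s i < N) \<and>
        (\<forall>i j l i' j' l'. i < j \<longrightarrow> j < l \<longrightarrow> l < m \<longrightarrow> i' < j' \<longrightarrow> j' < l' \<longrightarrow> l' < m \<longrightarrow>
           c (s i) (s j) (s l) = c (s i') (s j') (s l'))"
      using s S' hom by (intro exI[of _ s]) auto
  qed
qed

definition nbr :: "'a graph \<Rightarrow> 'a \<Rightarrow> 'a set" where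
  "nbr H x = {y. adj H x y}"

lemma clique_proj:
  fixes H :: "'a graph"
  assumes wf: "wf_graph H" and R: "R \<subseteq> verts H" "card R = t" "clique R (edges H)"
  shows "is_projection (complete_graph t) H"
proof -
  have fin: "finite R" using R(1) wf finite_subset by (auto simp: wf_graph_def)
  obtain e where e: "bij_betw e {0..<t} R" using ex_bij_betw_nat_finite[OF fin] R(2) by blast
  have ev: "e i \<in> R" if "i < t" for i using e that by (auto simp: bij_betw_def)
  have einj: "e i = e j \<Longrightarrow> i = j" if "i < t" "j < t" for i j
    using e that by (auto simp: bij_betw_def inj_on_def)
  show ?thesis
  proof (rule Kt_family[OF wf, where C = "\<lambda>i. {e i}"])
    show "\<And>i. i < t \<Longrightarrow> {e i} \<subseteq> verts H" using ev R(1) by auto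
    show "\<And>i. i < t \<Longrightarrow> {e i} \<noteq> {}" by auto
    show "\<And>i x y. i < t \<Longrightarrow> x \<in> {e i} \<Longrightarrow> y \<in> {e i} \<Longrightarrow> \<not> adj H x y"
      using adj_irrefl[OF wf] by auto
    show "\<And>i j. i < t \<Longrightarrow> j < t \<Longrightarrow> i \<noteq> j \<Longrightarrow> {e i} \<inter> {e j} = {}"
      using einj by auto
    show "\<And>i j. i < t \<Longrightarrow> j < t \<Longrightarrow> i < j \<Longrightarrow> \<exists>x\<in>{e i}. \<exists>y\<in>{e j}. adj H x y"
    proof -
      fix i j assume ij: "i < t" "j < t" "i < j"
      then have "e i \<noteq> e j" using einj[of i j] by auto
      then have "{e i, e j} \<in> edges H" using R(3) ev ij unfolding clique_def by auto
      then show "\<exists>x\<in>{e i}. \<exists>y\<in>{e j}. adj H x y" by (simp add: adj_def)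
    qed
  qed
qed

lemma not_u:
  fixes H :: "'a graph"
  assumes wf: "wf_graph H" and ind: "\<And>i j. i < m \<Longrightarrow> j < m \<Longrightarrow> \<not> adj H (u i) (u j)"
    and a: "adj H (u i) y" "i < m" "k < m"
  shows "y \<noteq> u k"
  using ind[OF a(2) a(3)] a(1) by auto

lemma chain_up:
  fixes H :: "'a graph" and u :: "nat \<Rightarrow> 'a"
  assumes wf: "wf_graph H"
    and uv: "\<And>i. i < t+1 \<Longrightarrow> u i \<in> verts H"
    and ind: "\<And>i j. i < t+1 \<Longrightarrow> j < t+1 \<Longrightarrow> \<not> adj H (u i) (u j)"
    and dist: "\<And>i j. i < t+1 \<Longrightarrow> j < t+1 \<Longrightarrow> i \<noteq> j \<Longrightarrow> nbr H (u i) \<noteq> nbr H (u j)"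
    and ch: "\<And>i j. i < j \<Longrightarrow> j < t+1 \<Longrightarrow> nbr H (u i) \<subseteq> nbr H (u j)"
  shows "is_projection (complete_graph t) H"
proof -
  define y where "y i = (SOME z. adj H (u (i+1)) z \<and> \<not> adj H (u i) z)" for i
  have yp: "adj H (u (i+1)) (y i) \<and> \<not> adj H (u i) (y i)" if "i < t" for i
  proof -
    have "nbr H (u i) \<subseteq> nbr H (u (i+1))" "nbr H (u i) \<noteq> nbr H (u (i+1))"
      using ch[of i "i+1"] dist[of i "i+1"] that by auto
    then obtain z where "adj H (u (i+1)) z" "\<not> adj H (u i) z" by (auto simp: nbr_def)
    then have "\<exists>z. adj H (u (i+1)) z \<and> \<not> adj H (u i) z" by blast
    then show ?thesis unfolding y_def by (rule someI_ex)
  qed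
  have ya: "adj H (u j) (y i)" if "i < j" "j < t+1" for i j
  proof (cases "i + 1 = j")
    case True then show ?thesis using yp that by auto
  next
    case False
    then have "nbr H (u (i+1)) \<subseteq> nbr H (u j)" using ch[of "i+1" j] that by auto
    then show ?thesis using yp[of i] that by (auto simp: nbr_def)
  qed
  show ?thesis
  proof (rule pair_family[OF wf, where x = u and y = y])
    show "\<And>i. i < t \<Longrightarrow> u i \<in> verts H" using uv by auto
    show "\<And>i. i < t \<Longrightarrow> y i \<in> verts H" using yp adj_verts[OF wf] by blast
    show "\<And>i. i < t \<Longrightarrow> \<not> adj H (u i) (y i)" using yp by blast
    show "\<And>i j. i < t \<Longrightarrow> j < t \<Longrightarrow> u i = u j \<Longrightarrow> i = j"
    proof -
      fix i j assume "i < t" "j < t" "u i = u j"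
      then show "i = j" using dist[of i j] by (cases "i = j") auto
    qed
    show "\<And>i j. i < t \<Longrightarrow> j < t \<Longrightarrow> y i = y j \<Longrightarrow> i = j"
    proof -
      fix i j assume ij: "i < t" "j < t" "y i = y j"
      show "i = j"
      proof (rule ccontr)
        assume "i \<noteq> j"
        then consider "i < j" | "j < i" by linarith
        then show False
        proof cases
          case 1 then show False using ya[of i j] yp[of j] ij by auto
        next
          case 2 then show False using ya[of j i] yp[of i] ij by auto
        qed
      qed
    qed
    show "\<And>i j. i < t \<Longrightarrow> j < t \<Longrightarrow> u i \<noteq> y j"
    proof -
      fix i j assume "i < t" "j < t"
      then show "u i \<noteq> y j" using ind[of "j+1" i] yp[of j] by auto
    qed
    show "\<And>i j. i < j \<Longrightarrow> j < t \<Longrightarrow> adj H (u i) (y j) \<or> adj H (y i) (u j)"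
      using ya adj_sym by (metis less_SucI Suc_eq_plus1)
  qed
qed

lemma chain_down:
  fixes H :: "'a graph" and u :: "nat \<Rightarrow> 'a"
  assumes wf: "wf_graph H"
    and uv: "\<And>i. i < t+1 \<Longrightarrow> u i \<in> verts H"
    and ind: "\<And>i j. i < t+1 \<Longrightarrow> j < t+1 \<Longrightarrow> \<not> adj H (u i) (u j)"
    and dist: "\<And>i j. i < t+1 \<Longrightarrow> j < t+1 \<Longrightarrow> i \<noteq> j \<Longrightarrow> nbr H (u i) \<noteq> nbr H (u j)"
    and ch: "\<And>i j. i < j \<Longrightarrow> j < t+1 \<Longrightarrow> nbr H (u j) \<subseteq> nbr H (u i)"
  shows "is_projection (complete_graph t) H"
proof -
  define y where "y i = (SOME z. adj H (u i) z \<and> \<not> adj H (u (i+1)) z)" for i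
  have yp: "adj H (u i) (y i) \<and> \<not> adj H (u (i+1)) (y i)" if "i < t" for i
  proof -
    have "nbr H (u (i+1)) \<subseteq> nbr H (u i)" "nbr H (u i) \<noteq> nbr H (u (i+1))"
      using ch[of i "i+1"] dist[of i "i+1"] that by auto
    then obtain z where "adj H (u i) z" "\<not> adj H (u (i+1)) z" by (auto simp: nbr_def)
    then have "\<exists>z. adj H (u i) z \<and> \<not> adj H (u (i+1)) z" by blast
    then show ?thesis unfolding y_def by (rule someI_ex)
  qed
  have ya: "adj H (u (i+1)) (y j)" if "i < j" "j < t" for i j
  proof (cases "i + 1 = j")
    case True then show ?thesis using yp that by auto
  next
    case False
    then have "nbr H (u j) \<subseteq> nbr H (u (i+1))" using ch[of "i+1" j] that by auto
    then show ?thesis using yp[of j] that by (auto simp: nbr_def)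
  qed
  show ?thesis
  proof (rule pair_family[OF wf, where x = "\<lambda>i. u (i+1)" and y = y])
    show "\<And>i. i < t \<Longrightarrow> u (i+1) \<in> verts H" using uv by auto
    show "\<And>i. i < t \<Longrightarrow> y i \<in> verts H" using yp adj_verts[OF wf] by blast
    show "\<And>i. i < t \<Longrightarrow> \<not> adj H (u (i+1)) (y i)" using yp by blast
    show "\<And>i j. i < t \<Longrightarrow> j < t \<Longrightarrow> u (i+1) = u (j+1) \<Longrightarrow> i = j"
    proof -
      fix i j assume "i < t" "j < t" "u (i+1) = u (j+1)"
      then show "i = j" using dist[of "i+1" "j+1"] by (cases "i = j") auto
    qed
    show "\<And>i j. i < t \<Longrightarrow> j < t \<Longrightarrow> y i = y j \<Longrightarrow> i = j"
    proof -
      fix i j assume ij: "i < t" "j < t" "y i = y j"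
      show "i = j"
      proof (rule ccontr)
        assume "i \<noteq> j"
        then consider "i < j" | "j < i" by linarith
        then show False
        proof cases
          case 1 then show False using ya[of i j] yp[of i] ij by auto
        next
          case 2 then show False using ya[of j i] yp[of j] ij by auto
        qed
      qed
    qed
    show "\<And>i j. i < t \<Longrightarrow> j < t \<Longrightarrow> u (i+1) \<noteq> y j"
    proof -
      fix i j assume "i < t" "j < t"
      then show "u (i+1) \<noteq> y j" using ind[of j "i+1"] yp[of j] by auto
    qed
    show "\<And>i j. i < j \<Longrightarrow> j < t \<Longrightarrow> adj H (u (i+1)) (y j) \<or> adj H (y i) (u (j+1))"
      using ya by blast
  qed
qed

locale pat =
  fixes H :: "'a graph" and u :: "nat \<Rightarrow> 'a" and w :: "nat \<Rightarrow> nat \<Rightarrow> 'a" and m :: nat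
    and \<alpha> \<beta> \<gamma> :: bool
  assumes wf: "wf_graph H"
    and uv: "\<And>i. i < m \<Longrightarrow> u i \<in> verts H"
    and uind: "\<And>i j. i < m \<Longrightarrow> j < m \<Longrightarrow> \<not> adj H (u i) (u j)"
    and uinj: "\<And>i j. i < m \<Longrightarrow> j < m \<Longrightarrow> u i = u j \<Longrightarrow> i = j"
    and wa: "\<And>i j. i < j \<Longrightarrow> j < m \<Longrightarrow> adj H (u i) (w i j)"
    and wn: "\<And>i j. i < j \<Longrightarrow> j < m \<Longrightarrow> \<not> adj H (u j) (w i j)"
    and pa: "\<And>i j l. i < j \<Longrightarrow> j < l \<Longrightarrow> l < m \<Longrightarrow> adj H (w i j) (u l) = \<alpha>"
    and pb: "\<And>i j l. i < j \<Longrightarrow> j < l \<Longrightarrow> l < m \<Longrightarrow> adj H (w i l) (u j) = \<beta>"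
    and pc: "\<And>i j l. i < j \<Longrightarrow> j < l \<Longrightarrow> l < m \<Longrightarrow> adj H (w j l) (u i) = \<gamma>"
begin

lemma wv: "i < j \<Longrightarrow> j < m \<Longrightarrow> w i j \<in> verts H"
  using wa adj_verts[OF wf] by blast

lemma wu: "i < j \<Longrightarrow> j < m \<Longrightarrow> k < m \<Longrightarrow> u k \<noteq> w i j"
  using wa[of i j] uind[of i k] by auto

lemma caseAG:
  assumes "\<alpha> \<or> \<gamma>" and m: "2*t \<le> m"
  shows "is_projection (complete_graph t) H"
proof -
  have ex: "adj H (u (2*i+1)) (w (2*j) (2*j+1)) \<or> adj H (w (2*i) (2*i+1)) (u (2*j+1))"
    if "i < j" "j < t" for i j
  proof (cases \<alpha>)
    case True
    then show ?thesis using pa[of "2*i" "2*i+1" "2*j+1"] that m by auto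
  next
    case False
    then have \<gamma> using assms by auto
    then have "adj H (w (2*j) (2*j+1)) (u (2*i+1))" using pc[of "2*i+1" "2*j" "2*j+1"] that m by auto
    then show ?thesis using adj_sym by metis
  qed
  show ?thesis
  proof (rule pair_family[OF wf, where x = "\<lambda>i. u (2*i+1)" and y = "\<lambda>i. w (2*i) (2*i+1)"])
    show "\<And>i. i < t \<Longrightarrow> u (2*i+1) \<in> verts H" using uv m by auto
    show "\<And>i. i < t \<Longrightarrow> w (2*i) (2*i+1) \<in> verts H" using wv m by auto
    show "\<And>i. i < t \<Longrightarrow> \<not> adj H (u (2*i+1)) (w (2*i) (2*i+1))" using wn m by auto
    show "\<And>i j. i < t \<Longrightarrow> j < t \<Longrightarrow> u (2*i+1) = u (2*j+1) \<Longrightarrow> i = j"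
    proof -
      fix i j assume "i < t" "j < t" "u (2*i+1) = u (2*j+1)"
      then show "i = j" using uinj[of "2*i+1" "2*j+1"] m by auto
    qed
    show "\<And>i j. i < t \<Longrightarrow> j < t \<Longrightarrow> w (2*i) (2*i+1) = w (2*j) (2*j+1) \<Longrightarrow> i = j"
    proof -
      fix i j assume ij: "i < t" "j < t" "w (2*i) (2*i+1) = w (2*j) (2*j+1)"
      have no: "\<not> (a < b \<and> b < t \<and> w (2*a) (2*a+1) = w (2*b) (2*b+1))" for a b
      proof
        assume h: "a < b \<and> b < t \<and> w (2*a) (2*a+1) = w (2*b) (2*b+1)"
        show False
        proof (cases \<alpha>)
          case True
          then have "adj H (w (2*a) (2*a+1)) (u (2*b+1))" using pa[of "2*a" "2*a+1" "2*b+1"] h m by auto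
          moreover have "\<not> adj H (u (2*b+1)) (w (2*b) (2*b+1))" using wn[of "2*b" "2*b+1"] h m by auto
          ultimately show False using h adj_sym by metis
        next
          case False
          then have \<gamma> using assms by auto
          then have "adj H (w (2*b) (2*b+1)) (u (2*a+1))" using pc[of "2*a+1" "2*b" "2*b+1"] h m by auto
          moreover have "\<not> adj H (u (2*a+1)) (w (2*a) (2*a+1))" using wn[of "2*a" "2*a+1"] h m by auto
          ultimately show False using h adj_sym by metis
        qed
      qed
      show "i = j" using no[of i j] no[of j i] ij by (cases "i < j"; cases "j < i") auto
    qed
    show "\<And>i j. i < t \<Longrightarrow> j < t \<Longrightarrow> u (2*i+1) \<noteq> w (2*j) (2*j+1)" using wu m by auto
    show "\<And>i j. i < j \<Longrightarrow> j < t \<Longrightarrow>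
        adj H (u (2*i+1)) (w (2*j) (2*j+1)) \<or> adj H (w (2*i) (2*i+1)) (u (2*j+1))"
      using ex by blast
  qed
qed

lemma caseB:
  assumes "\<beta>" "\<not> \<gamma>" and m: "4*t+1 \<le> m"
  shows "is_projection (complete_graph t) H"
proof -
  have lt: "2*i+1 < 4*t-i" "4*t - i < m" if "i < t" for i using that m by auto
  have ya: "adj H (w (2*i+1) (4*t-i)) (u (2*j))" if "i < j" "j < t" for i j
    using pb[of "2*i+1" "2*j" "4*t-i"] that assms m by auto
  have yn: "\<not> adj H (w (2*i+1) (4*t-i)) (u (2*i))" if "i < t" for i
    using pc[of "2*i" "2*i+1" "4*t-i"] that assms m by auto
  show ?thesis
  proof (rule pair_family[OF wf, where x = "\<lambda>i. u (2*i)" and y = "\<lambda>i. w (2*i+1) (4*t-i)"])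
    show "\<And>i. i < t \<Longrightarrow> u (2*i) \<in> verts H" using uv m by auto
    show "\<And>i. i < t \<Longrightarrow> w (2*i+1) (4*t-i) \<in> verts H" using wv lt by auto
    show "\<And>i. i < t \<Longrightarrow> \<not> adj H (u (2*i)) (w (2*i+1) (4*t-i))" using yn adj_sym by metis
    show "\<And>i j. i < t \<Longrightarrow> j < t \<Longrightarrow> u (2*i) = u (2*j) \<Longrightarrow> i = j"
    proof -
      fix i j assume "i < t" "j < t" "u (2*i) = u (2*j)"
      then show "i = j" using uinj[of "2*i" "2*j"] m by auto
    qed
    show "\<And>i j. i < t \<Longrightarrow> j < t \<Longrightarrow> w (2*i+1) (4*t-i) = w (2*j+1) (4*t-j) \<Longrightarrow> i = j"
    proof -
      fix i j assume ij: "i < t" "j < t" "w (2*i+1) (4*t-i) = w (2*j+1) (4*t-j)"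
      have no: "\<not> (a < b \<and> b < t \<and> w (2*a+1) (4*t-a) = w (2*b+1) (4*t-b))" for a b
        using ya[of a b] yn[of b] by auto
      show "i = j" using no[of i j] no[of j i] ij by (cases "i < j"; cases "j < i") auto
    qed
    show "\<And>i j. i < t \<Longrightarrow> j < t \<Longrightarrow> u (2*i) \<noteq> w (2*j+1) (4*t-j)" using wu lt m by auto
    show "\<And>i j. i < j \<Longrightarrow> j < t \<Longrightarrow>
        adj H (u (2*i)) (w (2*j+1) (4*t-j)) \<or> adj H (w (2*i+1) (4*t-i)) (u (2*j))"
      using ya by blast
  qed
qed

lemma caseN:
  assumes "\<not> \<alpha>" "\<not> \<beta>" "\<not> \<gamma>" and m: "2*M \<le> m"
    and R: "\<forall>(V::'a set) E. finite V \<and> card V \<ge> M \<longrightarrow>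
              (\<exists>R\<subseteq>V. card R = t \<and> clique R E \<or> card R = t*t \<and> indep R E)"
  shows "is_projection (complete_graph t) H"
proof -
  define z where "z k = w (2*k) (2*k+1)" for k
  have zv: "z k \<in> verts H" if "k < M" for k using wv[of "2*k" "2*k+1"] that m by (auto simp: z_def)
  have za: "adj H (u (2*l)) (z k) \<longleftrightarrow> k = l" if "k < M" "l < M" for k l
  proof -
    consider "k = l" | "l < k" | "k < l" by linarith
    then show ?thesis
    proof cases
      case 1 then show ?thesis using wa[of "2*k" "2*k+1"] that m by (auto simp: z_def)
    next
      case 2
      then have "\<not> adj H (w (2*k) (2*k+1)) (u (2*l))" using pc[of "2*l" "2*k" "2*k+1"] that m assms(3) by auto
      then show ?thesis using 2 adj_sym[of H "u (2*l)" "w (2*k) (2*k+1)"] by (auto simp: z_def)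
    next
      case 3
      then have "\<not> adj H (w (2*k) (2*k+1)) (u (2*l))" using pa[of "2*k" "2*k+1" "2*l"] that m assms(1) by auto
      then show ?thesis using 3 adj_sym[of H "u (2*l)" "w (2*k) (2*k+1)"] by (auto simp: z_def)
    qed
  qed
  have zinj: "inj_on z {..<M}"
  proof (rule inj_onI)
    fix k l assume kl: "k \<in> {..<M}" "l \<in> {..<M}" "z k = z l"
    have "adj H (u (2*k)) (z k)" using za[of k k] kl by simp
    then have "adj H (u (2*k)) (z l)" using kl(3) by simp
    then show "k = l" using za[of l k] kl by simp
  qed
  have fin: "finite (z ` {..<M})" by simp
  have card: "card (z ` {..<M}) \<ge> M" using zinj by (simp add: card_image)
  obtain S where S: "S \<subseteq> z ` {..<M}" "card S = t \<and> clique S (edges H) \<or> card S = t*t \<and> indep S (edges H)"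
    using R[rule_format, OF conjI[OF fin card]] by blast
  have SV: "S \<subseteq> verts H" using S(1) zv by auto
  show ?thesis
  proof (cases "card S = t \<and> clique S (edges H)")
    case True
    then show ?thesis using clique_proj[OF wf SV] by auto
  next
    case False
    then have Si: "card S = t*t" "indep S (edges H)" using S by auto
    have finS: "finite S" using finite_subset[OF S(1) fin] .
    obtain e where e0: "bij_betw e {0..<card S} S" using ex_bij_betw_nat_finite[OF finS] by blast
    then have e: "bij_betw e {0..<t*t} S" using Si(1) by simp
    have eS: "e k \<in> S" if "k < t*t" for k using bij_betwE[OF e] that by simp
    have einj: "e k = e l \<Longrightarrow> k = l" if "k < t*t" "l < t*t" for k l
      using inj_onD[OF bij_betw_imp_inj_on[OF e]] that by simp
    define mu where "mu k = (SOME l. l < M \<and> z l = e k)" for k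
    have mu: "mu k < M \<and> z (mu k) = e k" if "k < t*t" for k
    proof -
      have "e k \<in> z ` {..<M}" using eS[OF that] S(1) by blast
      then have "\<exists>l. l < M \<and> z l = e k" by (metis imageE lessThan_iff)
      then show ?thesis unfolding mu_def by (rule someI_ex)
    qed
    show ?thesis
    proof (rule matching_family[OF wf, where p = "\<lambda>k. u (2 * mu k)" and q = e])
      have mum: "2 * mu k < m" if "k < t*t" for k using mu[OF that] m by auto
      show "\<And>k. k < t*t \<Longrightarrow> u (2 * mu k) \<in> verts H" using uv mum by blast
      show "\<And>k. k < t*t \<Longrightarrow> e k \<in> verts H" using eS SV by auto
      show "\<And>k l. k < t*t \<Longrightarrow> l < t*t \<Longrightarrow> u (2 * mu k) = u (2 * mu l) \<Longrightarrow> k = l"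
      proof -
        fix k l assume kl: "k < t*t" "l < t*t" "u (2 * mu k) = u (2 * mu l)"
        then have "2 * mu k = 2 * mu l" using uinj[of "2 * mu k" "2 * mu l"] mu[OF kl(1)] mu[OF kl(2)] m by auto
        then have "e k = e l" using mu[OF kl(1)] mu[OF kl(2)] by auto
        then show "k = l" using einj kl by auto
      qed
      show "\<And>k l. k < t*t \<Longrightarrow> l < t*t \<Longrightarrow> e k = e l \<Longrightarrow> k = l" using einj by auto
      show "\<And>k l. k < t*t \<Longrightarrow> l < t*t \<Longrightarrow> u (2 * mu k) \<noteq> e l"
      proof -
        fix k l assume kl: "k < t*t" "l < t*t"
        have "u (2 * mu k) \<noteq> z (mu l)"
          unfolding z_def using wu[of "2 * mu l" "2 * mu l + 1" "2 * mu k"] mu[OF kl(1)] mu[OF kl(2)] m by auto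
        then show "u (2 * mu k) \<noteq> e l" using mu[OF kl(2)] by auto
      qed
      show "\<And>k l. k < t*t \<Longrightarrow> l < t*t \<Longrightarrow> \<not> adj H (u (2 * mu k)) (u (2 * mu l))"
        using uind mum by blast
      show "\<And>k l. k < t*t \<Longrightarrow> l < t*t \<Longrightarrow> \<not> adj H (e k) (e l)"
      proof -
        fix k l assume kl: "k < t*t" "l < t*t"
        show "\<not> adj H (e k) (e l)"
        proof (cases "e k = e l")
          case True then show ?thesis using adj_irrefl[OF wf] by auto
        next
          case False then show ?thesis using Si(2) eS[OF kl(1)] eS[OF kl(2)] by (auto simp: indep_def adj_def)
        qed
      qed
      show "\<And>k l. k < t*t \<Longrightarrow> l < t*t \<Longrightarrow> adj H (u (2 * mu k)) (e l) \<longleftrightarrow> k = l"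
      proof -
        fix k l assume kl: "k < t*t" "l < t*t"
        have "adj H (u (2 * mu k)) (e l) \<longleftrightarrow> mu l = mu k"
          using za[of "mu l" "mu k"] mu[OF kl(1)] mu[OF kl(2)] by auto
        also have "\<dots> \<longleftrightarrow> k = l"
        proof
          assume "mu l = mu k" then have "e l = e k" using mu[OF kl(1)] mu[OF kl(2)] by auto
          then show "k = l" using einj kl by auto
        qed auto
        finally show "adj H (u (2 * mu k)) (e l) \<longleftrightarrow> k = l" .
      qed
    qed
  qed
qed

end

lemma bits3:
  fixes a b c a' b' c' :: bool
  assumes "(if a then 1 else 0) + (if b then 2 else 0) + (if c then 4 else 0) =
           ((if a' then 1 else 0) + (if b' then 2 else 0) + (if c' then 4 else 0) :: nat)"
  shows "a = a' \<and> b = b' \<and> c = c'"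
  using assms by (cases a; cases b; cases c; cases a'; cases b'; cases c') auto

lemma antichain:
  fixes t :: nat
  shows "\<exists>m0::nat. \<forall>(H::'a graph) u. wf_graph H \<longrightarrow> (\<forall>i<m0. u i \<in> verts H) \<longrightarrow>
     (\<forall>i<m0. \<forall>j<m0. \<not> adj H (u i) (u j)) \<longrightarrow> (\<forall>i<m0. \<forall>j<m0. u i = u j \<longrightarrow> i = j) \<longrightarrow>
     (\<forall>i j. i < j \<longrightarrow> j < m0 \<longrightarrow> \<not> nbr H (u i) \<subseteq> nbr H (u j)) \<longrightarrow>
     is_projection (complete_graph t) H"
proof -
  obtain M where M1: "M \<ge> 1" and M: "\<forall>(V::'a set) E. finite V \<and> card V \<ge> M \<longrightarrow>
      (\<exists>R\<subseteq>V. card R = t \<and> clique R E \<or> card R = t*t \<and> indep R E)"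
    using ramsey2[of t "t*t"] by blast
  define m2 where "m2 = 2*M + 4*t + 1"
  obtain N3 where N3: "\<forall>c :: nat \<Rightarrow> nat \<Rightarrow> nat \<Rightarrow> nat. (\<forall>i j l. c i j l < 8) \<longrightarrow>
     (\<exists>s :: nat \<Rightarrow> nat. (\<forall>i j. i < j \<longrightarrow> j < m2 \<longrightarrow> s i < s j) \<and> (\<forall>i<m2. s i < N3) \<and>
        (\<forall>i j l i' j' l'. i < j \<longrightarrow> j < l \<longrightarrow> l < m2 \<longrightarrow> i' < j' \<longrightarrow> j' < l' \<longrightarrow> l' < m2 \<longrightarrow>
           c (s i) (s j) (s l) = c (s i') (s j') (s l')))"
    using ramsey_triples[of 8 m2] by blast
  show ?thesis
  proof (rule exI[of _ N3], intro allI impI)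
    fix H :: "'a graph" and u
    assume wf: "wf_graph H" and uv: "\<forall>i<N3. u i \<in> verts H"
      and ind: "\<forall>i<N3. \<forall>j<N3. \<not> adj H (u i) (u j)" and uinj: "\<forall>i<N3. \<forall>j<N3. u i = u j \<longrightarrow> i = j"
      and nc: "\<forall>i j. i < j \<longrightarrow> j < N3 \<longrightarrow> \<not> nbr H (u i) \<subseteq> nbr H (u j)"
    define w where "w i j = (SOME z. adj H (u i) z \<and> \<not> adj H (u j) z)" for i j
    have wp: "adj H (u i) (w i j) \<and> \<not> adj H (u j) (w i j)" if "i < j" "j < N3" for i j
    proof -
      have "\<exists>z. adj H (u i) z \<and> \<not> adj H (u j) z" using nc that by (auto simp: nbr_def)
      then show ?thesis unfolding w_def by (rule someI_ex)
    qed
    define c3 where "c3 i j l = (if adj H (w i j) (u l) then 1 else 0) + (if adj H (w i l) (u j) then 2 else 0)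
        + (if adj H (w j l) (u i) then 4 else (0::nat))" for i j l
    have "\<forall>i j l. c3 i j l < 8" by (simp add: c3_def)
    then obtain s where s1: "\<forall>i j. i < j \<longrightarrow> j < m2 \<longrightarrow> s i < s j" and s2: "\<forall>i<m2. s i < N3"
      and s3: "\<forall>i j l i' j' l'. i < j \<longrightarrow> j < l \<longrightarrow> l < m2 \<longrightarrow> i' < j' \<longrightarrow> j' < l' \<longrightarrow> l' < m2 \<longrightarrow>
           c3 (s i) (s j) (s l) = c3 (s i') (s j') (s l')"
      using N3 by blast
    define u2 where "u2 i = u (s i)" for i
    define w2 where "w2 i j = w (s i) (s j)" for i j
    define \<alpha> where "\<alpha> = adj H (w2 0 1) (u2 2)"
    define \<beta> where "\<beta> = adj H (w2 0 2) (u2 1)"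
    define \<gamma> where "\<gamma> = adj H (w2 1 2) (u2 0)"
    have m2: "3 \<le> m2" using M1 by (simp add: m2_def)
    have pat3: "adj H (w2 i j) (u2 l) = \<alpha> \<and> adj H (w2 i l) (u2 j) = \<beta> \<and> adj H (w2 j l) (u2 i) = \<gamma>"
      if "i < j" "j < l" "l < m2" for i j l
    proof -
      have "c3 (s i) (s j) (s l) = c3 (s 0) (s 1) (s 2)" using s3[rule_format, of i j l 0 1 2] that m2 by simp
      then show ?thesis unfolding c3_def \<alpha>_def \<beta>_def \<gamma>_def u2_def w2_def by (rule bits3)
    qed
    interpret P: pat H u2 w2 m2 \<alpha> \<beta> \<gamma>
    proof
      show "wf_graph H" by (rule wf)
      show "\<And>i. i < m2 \<Longrightarrow> u2 i \<in> verts H" unfolding u2_def using uv s2 by blast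
      show "\<And>i j. i < m2 \<Longrightarrow> j < m2 \<Longrightarrow> \<not> adj H (u2 i) (u2 j)" unfolding u2_def using ind s2 by blast
      show "\<And>i j. i < m2 \<Longrightarrow> j < m2 \<Longrightarrow> u2 i = u2 j \<Longrightarrow> i = j"
      proof -
        fix i j assume ij: "i < m2" "j < m2" "u2 i = u2 j"
        then have "s i = s j" using uinj s2 ij(1,2) unfolding u2_def by blast
        then show "i = j" using s1 ij by (metis linorder_neqE_nat less_irrefl)
      qed
      have wp2: "adj H (u2 i) (w2 i j) \<and> \<not> adj H (u2 j) (w2 i j)" if "i < j" "j < m2" for i j
      proof -
        have "s i < s j" "s j < N3" using s1 s2 that by auto
        then show ?thesis using wp[of "s i" "s j"] by (simp add: u2_def w2_def)
      qed
      show "\<And>i j. i < j \<Longrightarrow> j < m2 \<Longrightarrow> adj H (u2 i) (w2 i j)" using wp2 by blast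
      show "\<And>i j. i < j \<Longrightarrow> j < m2 \<Longrightarrow> \<not> adj H (u2 j) (w2 i j)" using wp2 by blast
      show "\<And>i j l. i < j \<Longrightarrow> j < l \<Longrightarrow> l < m2 \<Longrightarrow> adj H (w2 i j) (u2 l) = \<alpha>" using pat3 by blast
      show "\<And>i j l. i < j \<Longrightarrow> j < l \<Longrightarrow> l < m2 \<Longrightarrow> adj H (w2 i l) (u2 j) = \<beta>" using pat3 by blast
      show "\<And>i j l. i < j \<Longrightarrow> j < l \<Longrightarrow> l < m2 \<Longrightarrow> adj H (w2 j l) (u2 i) = \<gamma>" using pat3 by blast
    qed
    show "is_projection (complete_graph t) H"
    proof (cases "\<alpha> \<or> \<gamma>")
      case True
      have "2*t \<le> m2" by (simp add: m2_def)
      with True show ?thesis using P.caseAG[of t] by blast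
    next
      case False
      show ?thesis
      proof (cases \<beta>)
        case True
        have "4*t+1 \<le> m2" by (simp add: m2_def)
        with True show ?thesis using P.caseB[of t] False by blast
      next
        case nb: False
        have "2*M \<le> m2" by (simp add: m2_def)
        then show ?thesis using P.caseN[of M t] False nb M by blast
      qed
    qed
  qed
qed

lemma if012:
  shows "(if A then 0 else if B then 1 else (2::nat)) = 0 \<Longrightarrow> A"
    and "(if A then 0 else if B then 1 else (2::nat)) = 1 \<Longrightarrow> B"
    and "(if A then 0 else if B then 1 else (2::nat)) = 2 \<Longrightarrow> \<not> A"
  by (cases A; cases B; simp)+

lemma many_nbrs:
  fixes t :: nat
  shows "\<exists>n::nat. \<forall>(H::'a graph) v. wf_graph H \<longrightarrow> (\<forall>i<n. v i \<in> verts H) \<longrightarrow>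
     (\<forall>i<n. \<forall>j<n. \<not> adj H (v i) (v j)) \<longrightarrow>
     (\<forall>i<n. \<forall>j<n. i \<noteq> j \<longrightarrow> nbr H (v i) \<noteq> nbr H (v j)) \<longrightarrow>
     is_projection (complete_graph t) H"
proof -
  obtain m0 :: nat where m0: "\<forall>(H::'a graph) u. wf_graph H \<longrightarrow> (\<forall>i<m0. u i \<in> verts H) \<longrightarrow>
     (\<forall>i<m0. \<forall>j<m0. \<not> adj H (u i) (u j)) \<longrightarrow> (\<forall>i<m0. \<forall>j<m0. u i = u j \<longrightarrow> i = j) \<longrightarrow>
     (\<forall>i j. i < j \<longrightarrow> j < m0 \<longrightarrow> \<not> nbr H (u i) \<subseteq> nbr H (u j)) \<longrightarrow>
     is_projection (complete_graph t) H"
    using antichain[of t] by blast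
  define m1 where "m1 = m0 + t + 2"
  obtain N2 where N2: "\<forall>c :: nat \<Rightarrow> nat \<Rightarrow> nat. (\<forall>i j. c i j < 3) \<longrightarrow>
     (\<exists>s :: nat \<Rightarrow> nat. (\<forall>i j. i < j \<longrightarrow> j < m1 \<longrightarrow> s i < s j) \<and> (\<forall>i<m1. s i < N2) \<and>
        (\<forall>i j i' j'. i < j \<longrightarrow> j < m1 \<longrightarrow> i' < j' \<longrightarrow> j' < m1 \<longrightarrow> c (s i) (s j) = c (s i') (s j')))"
    using ramsey_pairs[of 3 m1] by blast
  show ?thesis
  proof (rule exI[of _ N2], intro allI impI)
    fix H :: "'a graph" and v
    assume wf: "wf_graph H" and vv: "\<forall>i<N2. v i \<in> verts H"
      and ind: "\<forall>i<N2. \<forall>j<N2. \<not> adj H (v i) (v j)"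
      and dist: "\<forall>i<N2. \<forall>j<N2. i \<noteq> j \<longrightarrow> nbr H (v i) \<noteq> nbr H (v j)"
    define c where "c i j = (if nbr H (v i) \<subseteq> nbr H (v j) then 0 else if nbr H (v j) \<subseteq> nbr H (v i) then 1 else (2::nat))" for i j
    have "\<forall>i j. c i j < 3" by (simp add: c_def)
    then obtain s where s1: "\<forall>i j. i < j \<longrightarrow> j < m1 \<longrightarrow> s i < s j" and s2: "\<forall>i<m1. s i < N2"
      and s3: "\<forall>i j i' j'. i < j \<longrightarrow> j < m1 \<longrightarrow> i' < j' \<longrightarrow> j' < m1 \<longrightarrow> c (s i) (s j) = c (s i') (s j')"
      using N2 by blast
    define u where "u i = v (s i)" for i
    have uv: "u i \<in> verts H" if "i < m1" for i unfolding u_def using vv s2 that by blast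
    have uind: "\<not> adj H (u i) (u j)" if "i < m1" "j < m1" for i j unfolding u_def using ind s2 that by blast
    have sinj: "s i \<noteq> s j" if "i < m1" "j < m1" "i \<noteq> j" for i j
      using s1 that by (metis linorder_neqE_nat less_irrefl)
    have udist: "nbr H (u i) \<noteq> nbr H (u j)" if "i < m1" "j < m1" "i \<noteq> j" for i j
      unfolding u_def using dist s2 sinj[OF that] that by blast
    have hom: "c (s i) (s j) = c (s 0) (s 1)" if "i < j" "j < m1" for i j
      using s3[rule_format, of i j 0 1] that by (simp add: m1_def)
    have cu: "c (s i) (s j) = (if nbr H (u i) \<subseteq> nbr H (u j) then 0 else if nbr H (u j) \<subseteq> nbr H (u i) then 1 else 2)" for i j
      by (simp add: c_def u_def)
    have c012: "c (s 0) (s 1) < 3" by (simp add: c_def)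
    consider "c (s 0) (s 1) = 0" | "c (s 0) (s 1) = 1" | "c (s 0) (s 1) = 2" using c012 by linarith
    then show "is_projection (complete_graph t) H"
    proof cases
      case 1
      show ?thesis
      proof (rule chain_up[OF wf, where u = u])
        show "\<And>i. i < t+1 \<Longrightarrow> u i \<in> verts H" using uv by (simp add: m1_def)
        show "\<And>i j. i < t+1 \<Longrightarrow> j < t+1 \<Longrightarrow> \<not> adj H (u i) (u j)" using uind by (simp add: m1_def)
        show "\<And>i j. i < t+1 \<Longrightarrow> j < t+1 \<Longrightarrow> i \<noteq> j \<Longrightarrow> nbr H (u i) \<noteq> nbr H (u j)" using udist by (simp add: m1_def)
        show "\<And>i j. i < j \<Longrightarrow> j < t+1 \<Longrightarrow> nbr H (u i) \<subseteq> nbr H (u j)"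
        proof -
          fix i j assume ij: "i < j" "j < t+1"
          then have "c (s i) (s j) = 0" using hom[of i j] 1 by (simp add: m1_def)
          then show "nbr H (u i) \<subseteq> nbr H (u j)" using cu[of i j] if012(1) by metis
        qed
      qed
    next
      case 2
      show ?thesis
      proof (rule chain_down[OF wf, where u = u])
        show "\<And>i. i < t+1 \<Longrightarrow> u i \<in> verts H" using uv by (simp add: m1_def)
        show "\<And>i j. i < t+1 \<Longrightarrow> j < t+1 \<Longrightarrow> \<not> adj H (u i) (u j)" using uind by (simp add: m1_def)
        show "\<And>i j. i < t+1 \<Longrightarrow> j < t+1 \<Longrightarrow> i \<noteq> j \<Longrightarrow> nbr H (u i) \<noteq> nbr H (u j)" using udist by (simp add: m1_def)
        show "\<And>i j. i < j \<Longrightarrow> j < t+1 \<Longrightarrow> nbr H (u j) \<subseteq> nbr H (u i)"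
        proof -
          fix i j assume ij: "i < j" "j < t+1"
          then have "c (s i) (s j) = 1" using hom[of i j] 2 by (simp add: m1_def)
          then show "nbr H (u j) \<subseteq> nbr H (u i)" using cu[of i j] if012(2) by metis
        qed
      qed
    next
      case 3
      have A: "\<forall>i<m0. u i \<in> verts H" using uv by (simp add: m1_def)
      have B: "\<forall>i<m0. \<forall>j<m0. \<not> adj H (u i) (u j)" using uind by (simp add: m1_def)
      have C: "\<forall>i<m0. \<forall>j<m0. u i = u j \<longrightarrow> i = j"
      proof (intro allI impI)
        fix i j assume "i < m0" "j < m0" "u i = u j"
        then show "i = j" using udist[of i j] by (cases "i = j") (auto simp: m1_def)
      qed
      have D: "\<forall>i j. i < j \<longrightarrow> j < m0 \<longrightarrow> \<not> nbr H (u i) \<subseteq> nbr H (u j)"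
      proof (intro allI impI)
        fix i j assume ij: "i < j" "j < m0"
        then have "c (s i) (s j) = 2" using hom[of i j] 3 by (simp add: m1_def)
        then show "\<not> nbr H (u i) \<subseteq> nbr H (u j)" using cu[of i j] if012(3) by metis
      qed
      have "wf_graph H \<longrightarrow> (\<forall>i<m0. u i \<in> verts H) \<longrightarrow>
        (\<forall>i<m0. \<forall>j<m0. \<not> adj H (u i) (u j)) \<longrightarrow> (\<forall>i<m0. \<forall>j<m0. u i = u j \<longrightarrow> i = j) \<longrightarrow>
        (\<forall>i j. i < j \<longrightarrow> j < m0 \<longrightarrow> \<not> nbr H (u i) \<subseteq> nbr H (u j)) \<longrightarrow>
        is_projection (complete_graph t) H" using spec[OF spec[OF m0, of H], of u] .
      then show ?thesis using wf A B C D by blast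
    qed
  qed
qed

lemma nbr_classes:
  fixes t :: nat
  shows "\<exists>G::nat. \<forall>(H::'a graph). wf_graph H \<longrightarrow> \<not> is_projection (complete_graph t) H \<longrightarrow>
     card (nbr H ` verts H) < G"
proof -
  obtain n :: nat where n: "\<forall>(H::'a graph) v. wf_graph H \<longrightarrow> (\<forall>i<n. v i \<in> verts H) \<longrightarrow>
     (\<forall>i<n. \<forall>j<n. \<not> adj H (v i) (v j)) \<longrightarrow>
     (\<forall>i<n. \<forall>j<n. i \<noteq> j \<longrightarrow> nbr H (v i) \<noteq> nbr H (v j)) \<longrightarrow>
     is_projection (complete_graph t) H"
    using many_nbrs[of t] by blast
  obtain r where r: "\<forall>(V::'a set) E. finite V \<and> card V \<ge> r \<longrightarrow>
      (\<exists>R\<subseteq>V. card R = t \<and> clique R E \<or> card R = n \<and> indep R E)"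
    using ramsey2[of t n] by blast
  show ?thesis
  proof (rule exI[of _ r], intro allI impI)
    fix H :: "'a graph" assume wf: "wf_graph H" and nK: "\<not> is_projection (complete_graph t) H"
    show "card (nbr H ` verts H) < r"
    proof (rule ccontr)
      assume "\<not> card (nbr H ` verts H) < r"
      then have big: "card (nbr H ` verts H) \<ge> r" by simp
      have finV: "finite (verts H)" using wf by (simp add: wf_graph_def)
      define rep where "rep S = (SOME x. x \<in> verts H \<and> nbr H x = S)" for S
      have rep: "rep S \<in> verts H \<and> nbr H (rep S) = S" if "S \<in> nbr H ` verts H" for S
      proof -
        have "\<exists>x. x \<in> verts H \<and> nbr H x = S" using that by blast
        then show ?thesis unfolding rep_def by (rule someI_ex)
      qed
      define Rp where "Rp = rep ` (nbr H ` verts H)"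
      have injrep: "inj_on rep (nbr H ` verts H)"
      proof (rule inj_onI)
        fix S T assume ST: "S \<in> nbr H ` verts H" "T \<in> nbr H ` verts H" "rep S = rep T"
        have "S = nbr H (rep S)" using rep[OF ST(1)] by simp
        also have "\<dots> = nbr H (rep T)" using ST(3) by simp
        also have "\<dots> = T" using rep[OF ST(2)] by simp
        finally show "S = T" .
      qed
      have cardRp: "card Rp = card (nbr H ` verts H)" unfolding Rp_def using card_image[OF injrep] .
      have RpV: "Rp \<subseteq> verts H" unfolding Rp_def using rep by blast
      have finRp: "finite Rp" using finite_subset[OF RpV finV] .
      have injn: "inj_on (nbr H) Rp"
      proof (rule inj_onI)
        fix x y assume "x \<in> Rp" "y \<in> Rp" "nbr H x = nbr H y"
        then obtain S T where "S \<in> nbr H ` verts H" "T \<in> nbr H ` verts H" "x = rep S" "y = rep T"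
          unfolding Rp_def by blast
        then have "S = T" using rep \<open>nbr H x = nbr H y\<close> by simp
        then show "x = y" using \<open>x = rep S\<close> \<open>y = rep T\<close> by simp
      qed
      obtain R where R: "R \<subseteq> Rp" "card R = t \<and> clique R (edges H) \<or> card R = n \<and> indep R (edges H)"
        using r[rule_format, OF conjI[OF finRp]] big cardRp by auto
      have RV: "R \<subseteq> verts H" using R(1) RpV by auto
      show False
      proof (cases "card R = t \<and> clique R (edges H)")
        case True then show False using clique_proj[OF wf RV] nK by auto
      next
        case False
        then have Ri: "card R = n" "indep R (edges H)" using R(2) by auto
        have finR: "finite R" using finite_subset[OF R(1) finRp] .
        obtain e where e0: "bij_betw e {0..<card R} R" using ex_bij_betw_nat_finite[OF finR] by blast
        then have e: "bij_betw e {0..<n} R" using Ri(1) by simp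
        have eR: "e k \<in> R" if "k < n" for k using bij_betwE[OF e] that by simp
        have einj: "e k = e l \<Longrightarrow> k = l" if "k < n" "l < n" for k l
          using inj_onD[OF bij_betw_imp_inj_on[OF e]] that by simp
        have A: "\<forall>i<n. e i \<in> verts H" using eR RV by blast
        have B: "\<forall>i<n. \<forall>j<n. \<not> adj H (e i) (e j)"
        proof (intro allI impI)
          fix i j assume ij: "i < n" "j < n"
          show "\<not> adj H (e i) (e j)"
          proof (cases "e i = e j")
            case True then show ?thesis using adj_irrefl[OF wf] by auto
          next
            case False then show ?thesis using Ri(2) eR[OF ij(1)] eR[OF ij(2)] by (auto simp: indep_def adj_def)
          qed
        qed
        have C: "\<forall>i<n. \<forall>j<n. i \<noteq> j \<longrightarrow> nbr H (e i) \<noteq> nbr H (e j)"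
        proof (intro allI impI)
          fix i j assume ij: "i < n" "j < n" "i \<noteq> j"
          then have "e i \<noteq> e j" using einj by blast
          moreover have "e i \<in> Rp" "e j \<in> Rp" using eR ij R(1) by auto
          ultimately show "nbr H (e i) \<noteq> nbr H (e j)" using inj_onD[OF injn] by blast
        qed
        have "wf_graph H \<longrightarrow> (\<forall>i<n. e i \<in> verts H) \<longrightarrow>
          (\<forall>i<n. \<forall>j<n. \<not> adj H (e i) (e j)) \<longrightarrow>
          (\<forall>i<n. \<forall>j<n. i \<noteq> j \<longrightarrow> nbr H (e i) \<noteq> nbr H (e j)) \<longrightarrow>
          is_projection (complete_graph t) H" using spec[OF spec[OF n, of H], of e] .
        then show False using wf A B C nK by blast
      qed
    qed
  qed
qed

definition cls :: "'a graph \<Rightarrow> 'a \<Rightarrow> 'a set" where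
  "cls H x = {y \<in> verts H. nbr H y = nbr H x}"

lemma twin:
  assumes wf: "wf_graph H" and y: "y \<in> cls H x" and y': "y' \<in> cls H x'"
  shows "adj H y y' = adj H x x'"
proof -
  have n1: "nbr H y = nbr H x" and n2: "nbr H y' = nbr H x'" using y y' by (auto simp: cls_def)
  have "adj H y y' \<longleftrightarrow> y' \<in> nbr H y" by (simp add: nbr_def)
  also have "\<dots> \<longleftrightarrow> adj H x y'" using n1 by (simp add: nbr_def)
  also have "\<dots> \<longleftrightarrow> adj H y' x" by (rule adj_sym)
  also have "\<dots> \<longleftrightarrow> x \<in> nbr H y'" by (simp add: nbr_def)
  also have "\<dots> \<longleftrightarrow> adj H x' x" using n2 by (simp add: nbr_def)
  also have "\<dots> \<longleftrightarrow> adj H x x'" by (rule adj_sym)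
  finally show ?thesis .
qed

lemma ex_en:
  assumes wf: "wf_graph H" and c: "card (cls H x) \<ge> n"
  shows "\<exists>g. inj_on g {..<n} \<and> g ` {..<n} \<subseteq> cls H x"
proof -
  have fin: "finite (cls H x)" using wf by (simp add: wf_graph_def cls_def)
  obtain T where T: "T \<subseteq> cls H x" "card T = n" using obtain_subset_with_card_n[OF c] by blast
  have finT: "finite T" using finite_subset[OF T(1) fin] .
  obtain g where g0: "bij_betw g {0..<card T} T" using ex_bij_betw_nat_finite[OF finT] by blast
  then have g: "bij_betw g {..<n} T" using T(2) by (simp add: lessThan_atLeast0)
  show ?thesis using g T(1) by (auto simp: bij_betw_def)
qed

lemma blow_kttt:
  fixes H :: "'a graph" and S :: "nat \<times> nat \<Rightarrow> ('a \<times> nat) set"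
  assumes wf: "wf_graph H"
    and en: "\<And>x. x \<in> R \<Longrightarrow> inj_on (en x) {..<2*t} \<and> en x ` {..<2*t} \<subseteq> cls H x"
    and rinj: "\<And>x x'. x \<in> R \<Longrightarrow> x' \<in> R \<Longrightarrow> nbr H x = nbr H x' \<Longrightarrow> x = x'"
    and Ssub: "\<And>p. p \<in> {0..<3} \<times> {0..<t} \<Longrightarrow> S p \<subseteq> R \<times> {..<2*t}"
    and Sne: "\<And>p. p \<in> {0..<3} \<times> {0..<t} \<Longrightarrow> S p \<noteq> {}"
    and Sdisj: "\<And>p q. p \<in> {0..<3} \<times> {0..<t} \<Longrightarrow> q \<in> {0..<3} \<times> {0..<t} \<Longrightarrow> p \<noteq> q \<Longrightarrow> S p \<inter> S q = {}"
    and Snon: "\<And>p q x k x' k'. p \<in> {0..<3} \<times> {0..<t} \<Longrightarrow> q \<in> {0..<3} \<times> {0..<t} \<Longrightarrow> fst p = fst q \<Longrightarrow>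
        (x, k) \<in> S p \<Longrightarrow> (x', k') \<in> S q \<Longrightarrow> \<not> adj H x x'"
    and Sedg: "\<And>p q. p \<in> {0..<3} \<times> {0..<t} \<Longrightarrow> q \<in> {0..<3} \<times> {0..<t} \<Longrightarrow> fst p \<noteq> fst q \<Longrightarrow>
        \<exists>x k x' k'. (x, k) \<in> S p \<and> (x', k') \<in> S q \<and> adj H x x'"
  shows "is_projection (complete_tripartite t) H"
proof -
  define C where "C p = (\<lambda>(x, k). en x k) ` S p" for p
  have incls: "en x k \<in> cls H x" if "(x, k) \<in> S p" "p \<in> {0..<3} \<times> {0..<t}" for x k p
  proof -
    have "x \<in> R" "k < 2*t" using Ssub[OF that(2)] that(1) by auto
    then show ?thesis using en[of x] by auto
  qed
  have adjC: "adj H (en x k) (en x' k') = adj H x x'"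
    if "(x, k) \<in> S p" "p \<in> {0..<3} \<times> {0..<t}" "(x', k') \<in> S q" "q \<in> {0..<3} \<times> {0..<t}" for x k x' k' p q
    using twin[OF wf incls[OF that(1,2)] incls[OF that(3,4)]] .
  show ?thesis
  proof (rule Kttt_family[OF wf, where C = C])
    show "\<And>i. i \<in> {0..<3} \<times> {0..<t} \<Longrightarrow> C i \<subseteq> verts H"
      using incls by (auto simp: C_def cls_def)
    show "\<And>i. i \<in> {0..<3} \<times> {0..<t} \<Longrightarrow> C i \<noteq> {}" using Sne by (simp add: C_def)
    show "\<And>i j. i \<in> {0..<3} \<times> {0..<t} \<Longrightarrow> j \<in> {0..<3} \<times> {0..<t} \<Longrightarrow> i \<noteq> j \<Longrightarrow> C i \<inter> C j = {}"
    proof -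
      fix p q :: "nat \<times> nat" assume pq: "p \<in> {0..<3} \<times> {0..<t}" "q \<in> {0..<3} \<times> {0..<t}" "p \<noteq> q"
      show "C p \<inter> C q = {}"
      proof (rule equals0I)
        fix z assume "z \<in> C p \<inter> C q"
        then obtain x k x' k' where xk: "(x, k) \<in> S p" "(x', k') \<in> S q" "z = en x k" "z = en x' k'"
          by (auto simp: C_def)
        have "z \<in> cls H x" using incls[OF xk(1) pq(1)] xk(3) by simp
        moreover have "z \<in> cls H x'" using incls[OF xk(2) pq(2)] xk(4) by simp
        ultimately have "z \<in> cls H x" "z \<in> cls H x'" by auto
        then have "nbr H x = nbr H x'" by (auto simp: cls_def)
        moreover have r: "x \<in> R" "x' \<in> R" "k < 2*t" "k' < 2*t"
          using Ssub[OF pq(1)] Ssub[OF pq(2)] xk(1,2) by auto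
        ultimately have "x = x'" using rinj by blast
        moreover then have "k = k'" using xk r en[of x] by (auto dest: inj_onD)
        ultimately show False using xk Sdisj[OF pq] by auto
      qed
    qed
    show "\<And>i j x y. i \<in> {0..<3} \<times> {0..<t} \<Longrightarrow> j \<in> {0..<3} \<times> {0..<t} \<Longrightarrow> fst i = fst j \<Longrightarrow>
       x \<in> C i \<Longrightarrow> y \<in> C j \<Longrightarrow> \<not> adj H x y"
    proof -
      fix p q :: "nat \<times> nat" and z z' assume pq: "p \<in> {0..<3} \<times> {0..<t}" "q \<in> {0..<3} \<times> {0..<t}" "fst p = fst q"
        and z: "z \<in> C p" "z' \<in> C q"
      then obtain x k x' k' where xk: "(x, k) \<in> S p" "(x', k') \<in> S q" "z = en x k" "z' = en x' k'"
        by (auto simp: C_def)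
      show "\<not> adj H z z'" using adjC[OF xk(1) pq(1) xk(2) pq(2)] Snon[OF pq xk(1,2)] xk by simp
    qed
    show "\<And>i j. i \<in> {0..<3} \<times> {0..<t} \<Longrightarrow> j \<in> {0..<3} \<times> {0..<t} \<Longrightarrow> fst i \<noteq> fst j \<Longrightarrow>
       \<exists>x\<in>C i. \<exists>y\<in>C j. adj H x y"
    proof -
      fix p q :: "nat \<times> nat" assume pq: "p \<in> {0..<3} \<times> {0..<t}" "q \<in> {0..<3} \<times> {0..<t}" "fst p \<noteq> fst q"
      obtain x k x' k' where xk: "(x, k) \<in> S p" "(x', k') \<in> S q" "adj H x x'" using Sedg[OF pq] by blast
      have "en x k \<in> C p" "en x' k' \<in> C q" using xk by (force simp: C_def)+
      moreover have "adj H (en x k) (en x' k')" using adjC[OF xk(1) pq(1) xk(2) pq(2)] xk(3) by simp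
      ultimately show "\<exists>x\<in>C p. \<exists>y\<in>C q. adj H x y" by blast
    qed
  qed
qed

lemma nbr_ne: "adj H x z \<Longrightarrow> \<not> adj H x' z \<Longrightarrow> nbr H x \<noteq> nbr H x'"
  by (auto simp: nbr_def)

lemma less3: "(i::nat) < 3 \<Longrightarrow> i = 0 \<or> i = 1 \<or> i = 2" by auto

lemma gen_kttt:
  fixes H :: "'a graph" and ra rb :: "nat \<Rightarrow> 'a"
  assumes wf: "wf_graph H"
    and big: "\<And>i. i < 3 \<Longrightarrow> card (cls H (ra i)) \<ge> 2*t \<and> card (cls H (rb i)) \<ge> 2*t"
    and hin: "\<And>i. i < 3 \<Longrightarrow> \<not> adj H (ra i) (rb i)"
    and hcross: "\<And>i i'. i < 3 \<Longrightarrow> i' < 3 \<Longrightarrow> i \<noteq> i' \<Longrightarrow>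
       adj H (ra i) (ra i') \<or> adj H (ra i) (rb i') \<or> adj H (rb i) (ra i') \<or> adj H (rb i) (rb i')"
    and inj0: "\<And>i i'. i < 3 \<Longrightarrow> i' < 3 \<Longrightarrow> ra i = ra i' \<Longrightarrow> i = i'"
    and inj1: "\<And>i i'. i < 3 \<Longrightarrow> i' < 3 \<Longrightarrow> rb i = rb i' \<Longrightarrow> i = i'"
    and rinj: "\<And>x x'. x \<in> ra ` {..<3} \<union> rb ` {..<3} \<Longrightarrow> x' \<in> ra ` {..<3} \<union> rb ` {..<3} \<Longrightarrow>
       nbr H x = nbr H x' \<Longrightarrow> x = x'"
  shows "is_projection (complete_tripartite t) H"
proof -
  define R where "R = ra ` {..<3} \<union> rb ` {..<3}"
  define en where "en x = (SOME g. inj_on g {..<2*t} \<and> g ` {..<2*t} \<subseteq> cls H x)" for x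
  define S where "S p = {(ra (fst p), snd p), (rb (fst p), t + snd p)}" for p :: "nat \<times> nat"
  show ?thesis
  proof (rule blow_kttt[OF wf, where R = R and en = en and S = S])
    show "\<And>x. x \<in> R \<Longrightarrow> inj_on (en x) {..<2*t} \<and> en x ` {..<2*t} \<subseteq> cls H x"
    proof -
      fix x assume "x \<in> R"
      then have "card (cls H x) \<ge> 2*t" using big unfolding R_def by auto
      then have "\<exists>g. inj_on g {..<2*t} \<and> g ` {..<2*t} \<subseteq> cls H x" by (rule ex_en[OF wf])
      then show "inj_on (en x) {..<2*t} \<and> en x ` {..<2*t} \<subseteq> cls H x" unfolding en_def by (rule someI_ex)
    qed
    show "\<And>x x'. x \<in> R \<Longrightarrow> x' \<in> R \<Longrightarrow> nbr H x = nbr H x' \<Longrightarrow> x = x'" using rinj unfolding R_def by blast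
    show "\<And>p. p \<in> {0..<3} \<times> {0..<t} \<Longrightarrow> S p \<subseteq> R \<times> {..<2*t}" by (auto simp: S_def R_def)
    show "\<And>p. p \<in> {0..<3} \<times> {0..<t} \<Longrightarrow> S p \<noteq> {}" by (simp add: S_def)
    show "\<And>p q. p \<in> {0..<3} \<times> {0..<t} \<Longrightarrow> q \<in> {0..<3} \<times> {0..<t} \<Longrightarrow> p \<noteq> q \<Longrightarrow> S p \<inter> S q = {}"
    proof -
      fix p q :: "nat \<times> nat" assume pq: "p \<in> {0..<3} \<times> {0..<t}" "q \<in> {0..<3} \<times> {0..<t}" "p \<noteq> q"
      obtain i j where pij: "p = (i, j)" by (cases p)
      obtain i' j' where qij: "q = (i', j')" by (cases q)
      have ij: "p = (i, j)" "q = (i', j')" "i < 3" "j < t" "i' < 3" "j' < t" using pq pij qij by auto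
      have a: "ra i = ra i' \<longrightarrow> i = i'" "rb i = rb i' \<longrightarrow> i = i'" using inj0 inj1 ij by blast+
      show "S p \<inter> S q = {}" using a ij pq(3) by (auto simp: S_def)
    qed
    show "\<And>p q x k x' k'. p \<in> {0..<3} \<times> {0..<t} \<Longrightarrow> q \<in> {0..<3} \<times> {0..<t} \<Longrightarrow> fst p = fst q \<Longrightarrow>
        (x, k) \<in> S p \<Longrightarrow> (x', k') \<in> S q \<Longrightarrow> \<not> adj H x x'"
    proof -
      fix p q :: "nat \<times> nat" and x k x' k'
      assume pq: "p \<in> {0..<3} \<times> {0..<t}" "q \<in> {0..<3} \<times> {0..<t}" "fst p = fst q"
        and xk: "(x, k) \<in> S p" "(x', k') \<in> S q"
      have i: "fst p < 3" using pq by auto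
      have "x \<in> {ra (fst p), rb (fst p)}" "x' \<in> {ra (fst p), rb (fst p)}" using xk pq(3) by (auto simp: S_def)
      moreover have "\<not> adj H (ra (fst p)) (rb (fst p))" "\<not> adj H (rb (fst p)) (ra (fst p))"
        using hin[OF i] adj_sym[of H] by auto
      moreover have "\<not> adj H (ra (fst p)) (ra (fst p))" "\<not> adj H (rb (fst p)) (rb (fst p))"
        using adj_irrefl[OF wf] by auto
      ultimately show "\<not> adj H x x'" by auto
    qed
    show "\<And>p q. p \<in> {0..<3} \<times> {0..<t} \<Longrightarrow> q \<in> {0..<3} \<times> {0..<t} \<Longrightarrow> fst p \<noteq> fst q \<Longrightarrow>
        \<exists>x k x' k'. (x, k) \<in> S p \<and> (x', k') \<in> S q \<and> adj H x x'"
    proof -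
      fix p q :: "nat \<times> nat" assume pq: "p \<in> {0..<3} \<times> {0..<t}" "q \<in> {0..<3} \<times> {0..<t}" "fst p \<noteq> fst q"
      have "fst p < 3" "fst q < 3" using pq by auto
      then have h: "adj H (ra (fst p)) (ra (fst q)) \<or> adj H (ra (fst p)) (rb (fst q)) \<or>
          adj H (rb (fst p)) (ra (fst q)) \<or> adj H (rb (fst p)) (rb (fst q))" using hcross pq(3) by blast
      have m: "(ra (fst p), snd p) \<in> S p" "(rb (fst p), t + snd p) \<in> S p"
        "(ra (fst q), snd q) \<in> S q" "(rb (fst q), t + snd q) \<in> S q" by (auto simp: S_def)
      from h show "\<exists>x k x' k'. (x, k) \<in> S p \<and> (x', k') \<in> S q \<and> adj H x x'"
        using m by blast
    qed
  qed
qed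

lemma lt3_eq: "{..<3::nat} = {0, 1, 2}" by auto

lemma gen6:
  fixes H :: "'a graph"
  assumes wf: "wf_graph H"
    and big: "card (cls H a0) \<ge> 2*t" "card (cls H b0) \<ge> 2*t" "card (cls H c0) \<ge> 2*t"
             "card (cls H a1) \<ge> 2*t" "card (cls H b1) \<ge> 2*t" "card (cls H c1) \<ge> 2*t"
    and hin: "\<not> adj H a0 a1" "\<not> adj H b0 b1" "\<not> adj H c0 c1"
    and cab: "adj H a0 b0 \<or> adj H a0 b1 \<or> adj H a1 b0 \<or> adj H a1 b1"
    and cac: "adj H a0 c0 \<or> adj H a0 c1 \<or> adj H a1 c0 \<or> adj H a1 c1"
    and cbc: "adj H b0 c0 \<or> adj H b0 c1 \<or> adj H b1 c0 \<or> adj H b1 c1"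
    and d0: "a0 \<noteq> b0" "a0 \<noteq> c0" "b0 \<noteq> c0"
    and d1: "a1 \<noteq> b1" "a1 \<noteq> c1" "b1 \<noteq> c1"
    and rinj: "\<forall>x\<in>{a0, b0, c0, a1, b1, c1}. \<forall>x'\<in>{a0, b0, c0, a1, b1, c1}. nbr H x = nbr H x' \<longrightarrow> x = x'"
  shows "is_projection (complete_tripartite t) H"
proof -
  define ra where "ra i = (if i = 0 then a0 else if i = 1 then b0 else c0)" for i :: nat
  define rb where "rb i = (if i = 0 then a1 else if i = 1 then b1 else c1)" for i :: nat
  have sy: "adj H x y = adj H y x" for x y by (rule adj_sym)
  show ?thesis
  proof (rule gen_kttt[OF wf, where ra = ra and rb = rb])
    show "\<And>i. i < 3 \<Longrightarrow> card (cls H (ra i)) \<ge> 2*t \<and> card (cls H (rb i)) \<ge> 2*t"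
    proof -
      fix i :: nat assume "i < 3"
      then have "i = 0 \<or> i = 1 \<or> i = 2" by auto
      then show "card (cls H (ra i)) \<ge> 2*t \<and> card (cls H (rb i)) \<ge> 2*t"
        by (elim disjE) (simp_all add: ra_def rb_def big)
    qed
    show "\<And>i. i < 3 \<Longrightarrow> \<not> adj H (ra i) (rb i)"
    proof -
      fix i :: nat assume "i < 3"
      then have "i = 0 \<or> i = 1 \<or> i = 2" by auto
      then show "\<not> adj H (ra i) (rb i)"
        by (elim disjE) (simp_all add: ra_def rb_def hin)
    qed
    show "\<And>i i'. i < 3 \<Longrightarrow> i' < 3 \<Longrightarrow> i \<noteq> i' \<Longrightarrow>
       adj H (ra i) (ra i') \<or> adj H (ra i) (rb i') \<or> adj H (rb i) (ra i') \<or> adj H (rb i) (rb i')"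
    proof -
      fix i i' :: nat assume ii: "i < 3" "i' < 3" "i \<noteq> i'"
      have cba: "adj H b0 a0 \<or> adj H b0 a1 \<or> adj H b1 a0 \<or> adj H b1 a1" using cab sy by metis
      have cca: "adj H c0 a0 \<or> adj H c0 a1 \<or> adj H c1 a0 \<or> adj H c1 a1" using cac sy by metis
      have ccb: "adj H c0 b0 \<or> adj H c0 b1 \<or> adj H c1 b0 \<or> adj H c1 b1" using cbc sy by metis
      have "(i = 0 \<and> i' = 1) \<or> (i = 0 \<and> i' = 2) \<or> (i = 1 \<and> i' = 0) \<or> (i = 1 \<and> i' = 2) \<or>
            (i = 2 \<and> i' = 0) \<or> (i = 2 \<and> i' = 1)" using ii by auto
      then show "adj H (ra i) (ra i') \<or> adj H (ra i) (rb i') \<or> adj H (rb i) (ra i') \<or> adj H (rb i) (rb i')"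
        by (elim disjE conjE) (simp_all add: ra_def rb_def cab cac cbc cba cca ccb)
    qed
    show "\<And>i i'. i < 3 \<Longrightarrow> i' < 3 \<Longrightarrow> ra i = ra i' \<Longrightarrow> i = i'"
    proof -
      fix i i' :: nat assume ii: "i < 3" "i' < 3" "ra i = ra i'"
      have "i = 0 \<or> i = 1 \<or> i = 2" "i' = 0 \<or> i' = 1 \<or> i' = 2" using ii by auto
      then show "i = i'" using ii(3) d0 by (auto simp: ra_def)
    qed
    show "\<And>i i'. i < 3 \<Longrightarrow> i' < 3 \<Longrightarrow> rb i = rb i' \<Longrightarrow> i = i'"
    proof -
      fix i i' :: nat assume ii: "i < 3" "i' < 3" "rb i = rb i'"
      have "i = 0 \<or> i = 1 \<or> i = 2" "i' = 0 \<or> i' = 1 \<or> i' = 2" using ii by auto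
      then show "i = i'" using ii(3) d1 by (auto simp: rb_def)
    qed
    have R: "ra ` {..<3} \<union> rb ` {..<3} = {a0, b0, c0, a1, b1, c1}"
      by (auto simp: lt3_eq ra_def rb_def)
    show "\<And>x x'. x \<in> ra ` {..<3} \<union> rb ` {..<3} \<Longrightarrow> x' \<in> ra ` {..<3} \<union> rb ` {..<3} \<Longrightarrow>
       nbr H x = nbr H x' \<Longrightarrow> x = x'"
      unfolding R using rinj by blast
  qed
qed

lemma tri_kttt:
  fixes H :: "'a graph"
  assumes wf: "wf_graph H"
    and big: "card (cls H a) \<ge> 2*t" "card (cls H b) \<ge> 2*t" "card (cls H c) \<ge> 2*t"
    and e: "adj H a b" "adj H b c" "adj H a c"
  shows "is_projection (complete_tripartite t) H"
proof -
  have ir: "\<not> adj H x x" for x using adj_irrefl[OF wf] by auto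
  have n: "nbr H a \<noteq> nbr H b" "nbr H b \<noteq> nbr H c" "nbr H a \<noteq> nbr H c"
    using nbr_ne[of H a b b] nbr_ne[of H b c c] nbr_ne[of H a c c] e ir by simp_all
  have d: "a \<noteq> b" "b \<noteq> c" "a \<noteq> c" using n by auto
  show ?thesis
    by (rule gen6[OF wf big big]) (use e ir d n in auto)
qed

lemma p4_kttt:
  fixes H :: "'a graph"
  assumes wf: "wf_graph H"
    and big: "card (cls H a) \<ge> 2*t" "card (cls H b) \<ge> 2*t" "card (cls H c) \<ge> 2*t" "card (cls H d) \<ge> 2*t"
    and e: "adj H a b" "adj H b c" "adj H c d"
    and ne: "\<not> adj H a c" "\<not> adj H b d" "\<not> adj H a d"
  shows "is_projection (complete_tripartite t) H"
proof -
  have s: "adj H b a" "adj H c b" "adj H d c" using e adj_sym[of H] by auto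
  have ns: "\<not> adj H c a" "\<not> adj H d b" "\<not> adj H d a" using ne adj_sym[of H] by auto
  have ir: "\<not> adj H x x" for x using adj_irrefl[OF wf] by auto
  have n: "nbr H a \<noteq> nbr H b" "nbr H c \<noteq> nbr H a" "nbr H a \<noteq> nbr H d"
          "nbr H b \<noteq> nbr H c" "nbr H b \<noteq> nbr H d" "nbr H c \<noteq> nbr H d"
    using nbr_ne[of H a b b] nbr_ne[of H c d a] nbr_ne[of H a b d] nbr_ne[of H b c c]
      nbr_ne[of H b a d] nbr_ne[of H c d d] e s ne ns ir by simp_all
  have d: "a \<noteq> b" "a \<noteq> c" "a \<noteq> d" "b \<noteq> c" "b \<noteq> d" "c \<noteq> d" using n by auto
  have rinj: "\<forall>x\<in>{a, b, c, d, b, c}. \<forall>x'\<in>{a, b, c, d, b, c}. nbr H x = nbr H x' \<longrightarrow> x = x'"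
    using n by auto
  show ?thesis
    by (rule gen6[OF wf big(1,2,3) big(4,2,3) _ _ _ _ _ _ _ _ _ _ _ _ rinj]) (use e s ne ns ir d in auto)
qed

lemma k22_kttt:
  fixes H :: "'a graph"
  assumes wf: "wf_graph H"
    and big: "card (cls H a) \<ge> 2*t" "card (cls H b) \<ge> 2*t" "card (cls H c) \<ge> 2*t" "card (cls H d) \<ge> 2*t"
    and e: "adj H a b" "adj H c d"
    and ne: "\<not> adj H a c" "\<not> adj H a d" "\<not> adj H b c" "\<not> adj H b d"
  shows "is_projection (complete_tripartite t) H"
proof -
  have s: "adj H b a" "adj H d c" using e adj_sym[of H] by auto
  have ns: "\<not> adj H c a" "\<not> adj H d a" "\<not> adj H c b" "\<not> adj H d b" using ne adj_sym[of H] by auto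
  have ir: "\<not> adj H x x" for x using adj_irrefl[OF wf] by auto
  have n: "nbr H a \<noteq> nbr H b" "nbr H a \<noteq> nbr H c" "nbr H a \<noteq> nbr H d"
          "nbr H b \<noteq> nbr H c" "nbr H b \<noteq> nbr H d" "nbr H c \<noteq> nbr H d"
    using nbr_ne[of H a b b] nbr_ne[of H a b c] nbr_ne[of H a b d] nbr_ne[of H b a c]
      nbr_ne[of H b a d] nbr_ne[of H c d d] e s ne ns ir by simp_all
  have d: "a \<noteq> b" "a \<noteq> c" "a \<noteq> d" "b \<noteq> c" "b \<noteq> d" "c \<noteq> d" using n by auto
  have rinj: "\<forall>x\<in>{a, c, d, c, b, d}. \<forall>x'\<in>{a, c, d, c, b, d}. nbr H x = nbr H x' \<longrightarrow> x = x'"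
    using n by auto
  show ?thesis
    by (rule gen6[OF wf big(1,3,4) big(3,2,4) _ _ _ _ _ _ _ _ _ _ _ _ rinj]) (use e s ne ns ir d in auto)
qed

lemma card_X_bound:
  fixes H :: "'a graph" and t :: nat
  assumes wf: "wf_graph H"
  defines "X \<equiv> {x \<in> verts H. card (cls H x) < 2*t}"
  shows "card X \<le> card (nbr H ` verts H) * (2*t)"
proof -
  have finV: "finite (verts H)" using wf by (simp add: wf_graph_def)
  have XV: "X \<subseteq> verts H" by (auto simp: X_def)
  have finX: "finite X" using finite_subset[OF XV finV] .
  have sub: "X \<subseteq> \<Union> (cls H ` X)" by (auto simp: X_def cls_def)
  have "\<Union> (cls H ` X) \<subseteq> verts H" by (auto simp: cls_def)
  then have finU: "finite (\<Union> (cls H ` X))" using finite_subset finV by blast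
  have "card X \<le> card (\<Union> (cls H ` X))" using card_mono[OF finU sub] .
  also have "\<dots> \<le> sum card (cls H ` X)" by (rule card_Union_le_sum_card)
  also have "\<dots> \<le> of_nat (card (cls H ` X)) * (2*t)"
    by (rule sum_bounded_above) (auto simp: X_def)
  also have "\<dots> = card (cls H ` X) * (2*t)" by simp
  also have "\<dots> \<le> card (nbr H ` verts H) * (2*t)"
  proof -
    have eq: "cls H ` X = (\<lambda>S. {y \<in> verts H. nbr H y = S}) ` (nbr H ` X)"
      by (auto simp: cls_def image_image)
    have "card (cls H ` X) \<le> card (nbr H ` X)" unfolding eq by (rule card_image_le) (simp add: finX)
    also have "\<dots> \<le> card (nbr H ` verts H)" by (rule card_mono) (use finV XV in auto)
    finally show ?thesis by simp
  qed
  finally show ?thesis .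
qed

lemma biclique_struct:
  fixes H :: "'a graph" and t :: nat
  assumes wf: "wf_graph H"
    and nT: "\<not> is_projection (complete_tripartite t) H"
  defines "X \<equiv> {x \<in> verts H. card (cls H x) < 2*t}"
  shows "extended_biclique (delete_set H X)"
proof -
  define V' where "V' = verts H - X"
  have V'iff: "x \<in> V' \<longleftrightarrow> x \<in> verts H \<and> card (cls H x) \<ge> 2*t" for x
    by (auto simp: V'_def X_def)
  have big: "card (cls H x) \<ge> 2*t" if "x \<in> V'" for x using V'iff that by blast
  have ir: "\<not> adj H x x" for x using adj_irrefl[OF wf] by auto
  have sy: "adj H x y = adj H y x" for x y by (rule adj_sym)
  have dv: "verts (delete_set H X) = V'" by (simp add: delete_set_def verts_def V'_def)
  have de: "e \<in> edges (delete_set H X) \<longleftrightarrow> (\<exists>x y. e = {x, y} \<and> adj H x y \<and> x \<in> V' \<and> y \<in> V')" for e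
  proof
    assume "e \<in> edges (delete_set H X)"
    then have e: "e \<in> edges H" "e \<inter> X = {}" by (auto simp: delete_set_def edges_def)
    then obtain x y where xy: "e = {x, y}" "adj H x y" using edge_form[OF wf] by blast
    then have "x \<in> verts H" "y \<in> verts H" using adj_verts[OF wf] by auto
    then have "x \<in> V'" "y \<in> V'" using e(2) xy(1) by (auto simp: V'_def)
    then show "\<exists>x y. e = {x, y} \<and> adj H x y \<and> x \<in> V' \<and> y \<in> V'" using xy by blast
  next
    assume "\<exists>x y. e = {x, y} \<and> adj H x y \<and> x \<in> V' \<and> y \<in> V'"
    then obtain x y where xy: "e = {x, y}" "adj H x y" "x \<in> V'" "y \<in> V'" by blast
    then show "e \<in> edges (delete_set H X)"
      by (auto simp: delete_set_def edges_def adj_def V'_def)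
  qed
  show ?thesis
  proof (cases "\<exists>a b. a \<in> V' \<and> b \<in> V' \<and> adj H a b")
    case False
    have "edges (delete_set H X) = {}" using de False by blast
    then have ee: "edges (delete_set H X) = {}" .
    show ?thesis unfolding extended_biclique_def
      by (rule exI[of _ "{}"], rule exI[of _ "{}"], rule exI[of _ V']) (use ee dv in auto)
  next
    case True
    then obtain a b where ab: "a \<in> V'" "b \<in> V'" "adj H a b" by blast
    define A where "A = {x \<in> V'. adj H x b}"
    define B where "B = {x \<in> V'. adj H x a}"
    define I where "I = V' - A - B"
    have T: "\<not> (adj H x a \<and> adj H x b)" if "x \<in> V'" for x
    proof
      assume h: "adj H x a \<and> adj H x b"
      have "is_projection (complete_tripartite t) H"
        by (rule tri_kttt[OF wf big[OF that] big[OF ab(1)] big[OF ab(2)]]) (use h ab in auto)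
      then show False using nT by simp
    qed
    have P4: "adj H x y" if "x \<in> A" "y \<in> B" for x y
    proof (rule ccontr)
      assume nxy: "\<not> adj H x y"
      have x: "x \<in> V'" "adj H x b" and y: "y \<in> V'" "adj H y a" using that by (auto simp: A_def B_def)
      have n1: "\<not> adj H x a" "\<not> adj H y b" using T x y by auto
      have f: "adj H x b" "adj H b a" "adj H a y" "\<not> adj H x a" "\<not> adj H b y" "\<not> adj H x y"
        using x y ab n1 nxy sy by auto
      have "is_projection (complete_tripartite t) H"
        by (rule p4_kttt[OF wf big[OF x(1)] big[OF ab(2)] big[OF ab(1)] big[OF y(1)] f])
      then show False using nT by simp
    qed
    have E: "(x \<in> A \<and> y \<in> B) \<or> (x \<in> B \<and> y \<in> A)" if xyV: "x \<in> V'" "y \<in> V'" and xy0: "adj H x y" for x y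
    proof (rule ccontr)
      assume nE: "\<not> ((x \<in> A \<and> y \<in> B) \<or> (x \<in> B \<and> y \<in> A))"
      have Tx: "\<not> (adj H x a \<and> adj H x b)" and Ty: "\<not> (adj H y a \<and> adj H y b)" using T xyV by auto
      have bx: "card (cls H x) \<ge> 2*t" and by': "card (cls H y) \<ge> 2*t" using big xyV by auto
      have ba: "card (cls H a) \<ge> 2*t" and bb: "card (cls H b) \<ge> 2*t" using big ab by auto
      have xy: "adj H x y" "adj H y x" using xy0 sy by auto
      have ab2: "adj H a b" "adj H b a" using ab sy by auto
      have nsy: "\<not> adj H u v \<Longrightarrow> \<not> adj H v u" for u v using sy by auto
      have psy: "adj H u v \<Longrightarrow> adj H v u" for u v using sy by auto
      have "is_projection (complete_tripartite t) H"
      proof (cases "adj H x b")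
        case xb: True
        then have xa: "\<not> adj H x a" using Tx by auto
        have ya: "\<not> adj H y a" using nE xb xyV by (auto simp: A_def B_def)
        show ?thesis
        proof (cases "adj H y b")
          case yb: True
          show ?thesis by (rule tri_kttt[OF wf bx by' bb xy(1) yb xb])
        next
          case nyb: False
          show ?thesis by (rule p4_kttt[OF wf by' bx bb ba xy(2) xb ab2(2) nyb xa ya])
        qed
      next
        case nxb: False
        show ?thesis
        proof (cases "adj H x a")
          case xa: True
          have yb: "\<not> adj H y b" using nE xa xyV by (auto simp: A_def B_def)
          show ?thesis
          proof (cases "adj H y a")
            case ya: True
            show ?thesis by (rule tri_kttt[OF wf bx by' ba xy(1) ya xa])
          next
            case nya: False
            show ?thesis by (rule p4_kttt[OF wf by' bx ba bb xy(2) xa ab2(1) nya nxb yb])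
          qed
        next
          case nxa: False
          show ?thesis
          proof (cases "adj H y b")
            case yb: True
            then have ya: "\<not> adj H y a" using Ty by auto
            show ?thesis by (rule p4_kttt[OF wf bx by' bb ba xy(1) yb ab2(2) nxb ya nxa])
          next
            case nyb: False
            show ?thesis
            proof (cases "adj H y a")
              case ya: True
              show ?thesis by (rule p4_kttt[OF wf bx by' ba bb xy(1) ya ab2(1) nxa nyb nxb])
            next
              case nya: False
              show ?thesis by (rule k22_kttt[OF wf ba bb bx by' ab2(1) xy(1) nsy[OF nxa] nsy[OF nya] nsy[OF nxb] nsy[OF nyb]])
            qed
          qed
        qed
      qed
      then show False using nT by simp
    qed
    have c1: "A \<inter> B = {}" using T by (auto simp: A_def B_def)
    have c2: "A \<inter> I = {}" "B \<inter> I = {}" by (auto simp: I_def)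
    have c3: "verts (delete_set H X) = A \<union> B \<union> I" using dv by (auto simp: I_def A_def B_def)
    have c4: "edges (delete_set H X) = {{a, b} |a b. a \<in> A \<and> b \<in> B}"
      proof (rule set_eqI, rule iffI)
        fix e assume "e \<in> edges (delete_set H X)"
        then obtain x y where xy: "e = {x, y}" "adj H x y" "x \<in> V'" "y \<in> V'" using de[of e] by blast
        then have "(x \<in> A \<and> y \<in> B) \<or> (x \<in> B \<and> y \<in> A)" using E[OF xy(3) xy(4) xy(2)] by blast
        then show "e \<in> {{a, b} |a b. a \<in> A \<and> b \<in> B}"
        proof
          assume "x \<in> A \<and> y \<in> B" then show ?thesis using xy(1) by blast
        next
          assume h: "x \<in> B \<and> y \<in> A"
          have "e = {y, x}" using xy(1) by (simp add: insert_commute)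
          then show ?thesis using h by blast
        qed
      next
        fix e assume "e \<in> {{a, b} |a b. a \<in> A \<and> b \<in> B}"
        then obtain x y where xy: "e = {x, y}" "x \<in> A" "y \<in> B" by blast
        have "adj H x y" using P4[OF xy(2) xy(3)] .
        moreover have "x \<in> V'" "y \<in> V'" using xy(2,3) by (auto simp: A_def B_def)
        ultimately show "e \<in> edges (delete_set H X)" using de[of e] xy(1) by blast
      qed
    show ?thesis unfolding extended_biclique_def
      by (rule exI[of _ A], rule exI[of _ B], rule exI[of _ I]) (use c1 c2 c3 c4 in simp)
  qed
qed

theorem theorem1p15:
  shows "\<exists>f :: nat \<Rightarrow> nat. \<forall>(H :: nat graph) t. wf_graph H \<and> t \<ge> 1 \<longrightarrow>
     is_projection (complete_graph t) H \<or>
     is_projection (complete_tripartite t) H \<or>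
     (\<exists>X \<subseteq> verts H. card X \<le> f t \<and> extended_biclique (delete_set H X))"
proof -
  have key: "\<forall>t::nat. \<exists>G::nat. \<forall>(H::nat graph). wf_graph H \<longrightarrow> \<not> is_projection (complete_graph t) H \<longrightarrow>
     card (nbr H ` verts H) < G"
    by (intro allI) (rule nbr_classes)
  obtain G where G: "\<forall>t::nat. \<forall>(H::nat graph). wf_graph H \<longrightarrow> \<not> is_projection (complete_graph t) H \<longrightarrow>
     card (nbr H ` verts H) < G t"
    using choice[OF key] by blast
  show ?thesis
  proof (rule exI[of _ "\<lambda>t. G t * (2*t)"], intro allI impI)
    fix H :: "nat graph" and t :: nat
    assume h: "wf_graph H \<and> t \<ge> 1"
    then have wf: "wf_graph H" by simp
    show "is_projection (complete_graph t) H \<or> is_projection (complete_tripartite t) H \<or>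
       (\<exists>X \<subseteq> verts H. card X \<le> G t * (2*t) \<and> extended_biclique (delete_set H X))"
    proof (cases "is_projection (complete_graph t) H \<or> is_projection (complete_tripartite t) H")
      case True then show ?thesis by blast
    next
      case False
      then have nK: "\<not> is_projection (complete_graph t) H" and nT: "\<not> is_projection (complete_tripartite t) H"
        by auto
      define X where "X = {x \<in> verts H. card (cls H x) < 2*t}"
      have "card (nbr H ` verts H) < G t" using G[rule_format, OF wf nK] .
      moreover have "card X \<le> card (nbr H ` verts H) * (2*t)" unfolding X_def by (rule card_X_bound[OF wf])
      ultimately have "card X \<le> G t * (2*t)" by (meson le_trans less_imp_le_nat mult_le_mono1)
      moreover have "X \<subseteq> verts H" by (auto simp: X_def)
      moreover have "extended_biclique (delete_set H X)" unfolding X_def by (rule biclique_struct[OF wf nT])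
      ultimately show ?thesis by blast
    qed
  qed
qed

end
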